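(* Let $\rho\colon[0,1]^2\times\mathbb{R}^n\to\mathbb{R}$ be a two-parameter family of probability densities with $\rho(s,t,\cdot)\in\mathcal P_2(\mathbb{R}^n)$, and let $\Psi_s,\Psi_t,\tilde\Phi_s,\tilde\Phi_t\colon[0,1]^2\times\mathbb{R}^n\to\mathbb{R}$. Define $$B(\Psi_s,\Psi_t,\rho)=\sqrt{\int \|\nabla\Psi_s\|^2\rho\, dx\cdot \int\|\nabla\Psi_t\|^2\rho\, dx-\Big(\int \nabla\Psi_s\cdot \nabla\Psi_t\,\rho\, dx\Big)^2 }.$$ Suppose that $$B^{-1}\nabla\cdot\Big(\rho \Big[\nabla\Psi_s\int \|\nabla\Psi_t\|^2\rho\,dx-\nabla\Psi_t\int \nabla\Psi_s\cdot \nabla\Psi_t\,\rho\,dx\Big]\Big)=\nabla\cdot(\rho\nabla\tilde\Phi_s),$$ $$B^{-1}\nabla\cdot\Big(\rho\Big[\nabla\Psi_t\int \|\nabla\Psi_s\|^2\rho\,dx-\nabla\Psi_s\int \nabla\Psi_s\cdot \nabla\Psi_t\,\rho\,dx\Big]\Big)=\nabla\cdot(\rho\nabla\tilde\Phi_t),$$ $$\partial_s\tilde\Phi_s+\partial_t\tilde\Phi_t+\nabla\tilde\Phi_s\cdot \nabla\Psi_s+\nabla\tilde\Phi_t\cdot \nabla\Psi_t-B^{-1}\Big[\tfrac{1}{2}\|\nabla\Psi_s\|^2\int\|\nabla\Psi_t\|^2\rho\,dx +\tfrac{1}{2}\|\nabla\Psi_t\|^2\int\|\nabla\Psi_s\|^2\rho\,dx-(\nabla\Psi_t\cdot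 \nabla\Psi_s)\int\nabla\Psi_t\cdot \nabla\Psi_s\,\rho\, dx\Big]=0,$$ $$\partial_s\rho+\nabla\cdot (\rho\nabla\Psi_s)=0,\qquad \partial_t\rho+\nabla\cdot (\rho\nabla\Psi_t)=0.$$ Then $(\rho,\Psi_s,\Psi_t)$ satisfies the critical-point system of the variational problem $$\inf_{\Psi_s,\Psi_t,\rho}\int_0^1\int_0^1 B(\Psi_s,\Psi_t,\rho)\,ds\,dt$$ subject to $\partial_s\rho+\nabla\cdot(\rho\nabla\Psi_s)=0$, $\partial_t\rho+\nabla\cdot(\rho\nabla\Psi_t)=0$, with the boundary curves $\rho(0,t,\cdot)$, $\rho(1,t,\cdot)$, $\rho(s,0,\cdot)$, $\rho(s,1,\cdot)$, $s,t\in[0,1]$, held fixed (with $\tilde\Phi_s,\tilde\Phi_t$ the Lagrange multipliers of the two continuity constraints).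
   Context: All integrals $\int$ without limits are over $\mathbb{R}^n$. $\mathcal P_2(\mathbb{R}^n)$ denotes probability densities with finite second moments. The boundary data are four densities at the corners of $[0,1]^2$ and the four Wasserstein-2 geodesics connecting them along the edges $s=0$, $s=1$, $t=0$, $t=1$. The critical-point system is the system obtained by setting to zero the $L^2$ first variations of the Lagrangian $\int_0^1\int_0^1 B\,ds\,dt+\int_0^1\int_0^1\int \tilde\Phi_s(\partial_s\rho+\nabla\cdot(\rho\nabla\Psi_s))+\tilde\Phi_t(\partial_t\rho+\nabla\cdot(\rho\nabla\Psi_t))\,dx\,ds\,dt$ with respect to $\rho,\Psi_s,\Psi_t,\tilde\Phi_s,\tilde\Phi_t$. *)

theory Defs
  imports "HOL-Analysis.Analysis"
begin

type_synonym 'n pt = "real \<times> real \<times> (real^'n)"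

definition pd :: "'a::real_normed_vector \<Rightarrow> ('a \<Rightarrow> real) \<Rightarrow> 'a \<Rightarrow> real" where
  "pd v f p = deriv (\<lambda>h. f (p + h *\<^sub>R v)) 0"

fun Ck :: "nat \<Rightarrow> 'a::real_normed_vector set \<Rightarrow> ('a \<Rightarrow> real) \<Rightarrow> bool" where
  "Ck 0 U f = continuous_on U f"
| "Ck (Suc k) U f = ((\<forall>p\<in>U. f differentiable (at p)) \<and> (\<forall>v. Ck k U (pd v f)))"

definition smooth_on :: "'a::real_normed_vector set \<Rightarrow> ('a \<Rightarrow> real) \<Rightarrow> bool" where
  "smooth_on U f = (\<forall>k. Ck k U f)"

definition Dom :: "('n::finite) pt set" where
  "Dom = {0<..<1} \<times> {0<..<1} \<times> UNIV"

definition dS :: "('n::finite pt \<Rightarrow> real) \<Rightarrow> 'n pt \<Rightarrow> real" where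
  "dS f p = pd (1, 0, 0) f p"

definition dT :: "('n::finite pt \<Rightarrow> real) \<Rightarrow> 'n pt \<Rightarrow> real" where
  "dT f p = pd (0, 1, 0) f p"

definition grad :: "('n::finite pt \<Rightarrow> real) \<Rightarrow> 'n pt \<Rightarrow> real^'n" where
  "grad f p = (\<chi> i. pd (0, 0, axis i 1) f p)"

definition divg :: "('n::finite pt \<Rightarrow> real^'n) \<Rightarrow> 'n pt \<Rightarrow> real" where
  "divg V p = (\<Sum>i\<in>UNIV. pd (0, 0, axis i 1) (\<lambda>q. V q $ i) p)"

definition xint :: "('n::finite pt \<Rightarrow> real) \<Rightarrow> real \<Rightarrow> real \<Rightarrow> real" where
  "xint F s t = (\<integral>x. F (s, t, x) \<partial>lborel)"

definition G :: "('n::finite pt \<Rightarrow> real) \<Rightarrow> ('n pt \<Rightarrow> real) \<Rightarrow> ('n pt \<Rightarrow> real) \<Rightarrow> real \<Rightarrow> real \<Rightarrow> real" where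
  "G f g \<rho> s t = xint (\<lambda>p. (grad f p \<bullet> grad g p) * \<rho> p) s t"

definition Bcost :: "('n::finite pt \<Rightarrow> real) \<Rightarrow> ('n pt \<Rightarrow> real) \<Rightarrow> ('n pt \<Rightarrow> real) \<Rightarrow> real \<Rightarrow> real \<Rightarrow> real" where
  "Bcost \<Psi>s \<Psi>t \<rho> s t = sqrt (G \<Psi>s \<Psi>s \<rho> s t * G \<Psi>t \<Psi>t \<rho> s t - (G \<Psi>s \<Psi>t \<rho> s t)\<^sup>2)"

definition Lag :: "('n::finite pt \<Rightarrow> real) \<Rightarrow> ('n pt \<Rightarrow> real) \<Rightarrow> ('n pt \<Rightarrow> real)
    \<Rightarrow> ('n pt \<Rightarrow> real) \<Rightarrow> ('n pt \<Rightarrow> real) \<Rightarrow> real" where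
  "Lag \<rho> \<Psi>s \<Psi>t \<Phi>s \<Phi>t =
     set_lebesgue_integral lborel {0..1} (\<lambda>s. set_lebesgue_integral lborel {0..1} (\<lambda>t.
        Bcost \<Psi>s \<Psi>t \<rho> s t
      + xint (\<lambda>p. \<Phi>s p * (dS \<rho> p + divg (\<lambda>q. \<rho> q *\<^sub>R grad \<Psi>s q) p)
                 + \<Phi>t p * (dT \<rho> p + divg (\<lambda>q. \<rho> q *\<^sub>R grad \<Psi>t q) p)) s t))"

text \<open>Admissible variations: smooth, compactly supported in the open square times R^n
  (so the boundary curves of rho are held fixed).\<close>
definition test_fun :: "('n::finite pt \<Rightarrow> real) \<Rightarrow> bool" where
  "test_fun \<eta> = (smooth_on UNIV \<eta> \<and>
     (\<exists>K. compact K \<and> K \<subseteq> Dom \<and> (\<forall>p. p \<notin> K \<longrightarrow> \<eta> p = 0)))"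

definition critical_point :: "('n::finite pt \<Rightarrow> real) \<Rightarrow> ('n pt \<Rightarrow> real) \<Rightarrow> ('n pt \<Rightarrow> real)
    \<Rightarrow> ('n pt \<Rightarrow> real) \<Rightarrow> ('n pt \<Rightarrow> real) \<Rightarrow> bool" where
  "critical_point \<rho> \<Psi>s \<Psi>t \<Phi>s \<Phi>t = (\<forall>\<eta>. test_fun \<eta> \<longrightarrow>
      ((\<lambda>\<epsilon>. Lag (\<lambda>p. \<rho> p + \<epsilon> * \<eta> p) \<Psi>s \<Psi>t \<Phi>s \<Phi>t) has_real_derivative 0) (at 0)
    \<and> ((\<lambda>\<epsilon>. Lag \<rho> (\<lambda>p. \<Psi>s p + \<epsilon> * \<eta> p) \<Psi>t \<Phi>s \<Phi>t) has_real_derivative 0) (at 0)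
    \<and> ((\<lambda>\<epsilon>. Lag \<rho> \<Psi>s (\<lambda>p. \<Psi>t p + \<epsilon> * \<eta> p) \<Phi>s \<Phi>t) has_real_derivative 0) (at 0)
    \<and> ((\<lambda>\<epsilon>. Lag \<rho> \<Psi>s \<Psi>t (\<lambda>p. \<Phi>s p + \<epsilon> * \<eta> p) \<Phi>t) has_real_derivative 0) (at 0)
    \<and> ((\<lambda>\<epsilon>. Lag \<rho> \<Psi>s \<Psi>t \<Phi>s (\<lambda>p. \<Phi>t p + \<epsilon> * \<eta> p)) has_real_derivative 0) (at 0))"

end

theory Submission
  imports Defs
begin


lemma pd_deriv:
  fixes f :: "'a::real_normed_vector \<Rightarrow> real"
  assumes "f differentiable (at p)"
  shows "((\<lambda>h. f (p + h *\<^sub>R v)) has_real_derivative pd v f p) (at 0)"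
proof -
  obtain f' where f': "(f has_derivative f') (at p)" using assms differentiable_def by blast
  have lin: "linear f'" using f' has_derivative_linear by blast
  have "((\<lambda>h. p + h *\<^sub>R v) has_derivative (\<lambda>h. h *\<^sub>R v)) (at 0)"
    by (auto intro!: derivative_eq_intros)
  from has_derivative_compose[OF this] f'
  have "((\<lambda>h. f (p + h *\<^sub>R v)) has_derivative (\<lambda>h. f' (h *\<^sub>R v))) (at 0)" by simp
  moreover have "(\<lambda>h. f' (h *\<^sub>R v)) = (*) (f' v)"
    using lin by (auto simp: linear_scale fun_eq_iff)
  ultimately have D: "((\<lambda>h. f (p + h *\<^sub>R v)) has_real_derivative f' v) (at 0)"
    by (simp add: has_field_derivative_def)
  hence "pd v f p = f' v" unfolding pd_def by (rule DERIV_imp_deriv)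
  with D show ?thesis by simp
qed

lemma pd_deriv_at:
  fixes f :: "'a::real_normed_vector \<Rightarrow> real"
  assumes "f differentiable (at (p + h0 *\<^sub>R v))"
  shows "((\<lambda>h. f (p + h *\<^sub>R v)) has_real_derivative pd v f (p + h0 *\<^sub>R v)) (at h0)"
proof -
  have "((\<lambda>h. f ((p + h0 *\<^sub>R v) + h *\<^sub>R v)) has_real_derivative pd v f (p + h0 *\<^sub>R v)) (at 0)"
    by (rule pd_deriv[OF assms])
  hence "((\<lambda>h. f (p + (h + h0) *\<^sub>R v)) has_real_derivative pd v f (p + h0 *\<^sub>R v)) (at 0)"
    by (simp add: algebra_simps)
  hence "((\<lambda>h. f (p + h *\<^sub>R v)) has_real_derivative pd v f (p + h0 *\<^sub>R v)) (at (0 + h0))"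
    using DERIV_shift[where f="\<lambda>h. f (p + h *\<^sub>R v)" and x=0 and z=h0] by simp
  thus ?thesis by simp
qed

lemma pd_local:
  assumes "open U" "p \<in> U" "\<And>q. q \<in> U \<Longrightarrow> f q = g q"
  shows "pd v f p = pd v g p"
proof -
  have "open ((\<lambda>h::real. p + h *\<^sub>R v) -` U)"
    by (rule continuous_open_vimage) (auto intro!: continuous_intros assms)
  hence "eventually (\<lambda>h. h \<in> (\<lambda>h::real. p + h *\<^sub>R v) -` U) (nhds 0)"
    using assms(2) by (intro eventually_nhds_in_open) auto
  hence "eventually (\<lambda>h. f (p + h *\<^sub>R v) = g (p + h *\<^sub>R v)) (nhds 0)"
    by eventually_elim (use assms(3) in auto)
  thus ?thesis unfolding pd_def by (intro deriv_cong_ev) auto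
qed


lemma pd_add:
  assumes "f differentiable (at p)" "g differentiable (at p)"
  shows "pd v (\<lambda>q. f q + g q) p = pd v f p + pd v g p"
  unfolding pd_def[of v "\<lambda>q. f q + g q"]
  by (rule DERIV_imp_deriv) (intro DERIV_add pd_deriv assms)

lemma pd_diff:
  assumes "f differentiable (at p)" "g differentiable (at p)"
  shows "pd v (\<lambda>q. f q - g q) p = pd v f p - pd v g p"
  unfolding pd_def[of v "\<lambda>q. f q - g q"]
  by (rule DERIV_imp_deriv) (intro DERIV_diff pd_deriv assms)

lemma pd_mult:
  assumes "f differentiable (at p)" "g differentiable (at p)"
  shows "pd v (\<lambda>q. f q * g q) p = pd v f p * g p + f p * pd v g p"
proof -
  have "((\<lambda>h. f (p + h *\<^sub>R v) * g (p + h *\<^sub>R v)) has_real_derivative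
     pd v f p * g (p + 0 *\<^sub>R v) + pd v g p * f (p + 0 *\<^sub>R v)) (at 0)"
    by (intro DERIV_mult pd_deriv assms)
  thus ?thesis unfolding pd_def[of v "\<lambda>q. f q * g q"]
    by (subst DERIV_imp_deriv) (auto simp: algebra_simps)
qed

lemma pd_cmult:
  assumes "f differentiable (at p)"
  shows "pd v (\<lambda>q. c * f q) p = c * pd v f p"
  unfolding pd_def[of v "\<lambda>q. c * f q"]
  by (rule DERIV_imp_deriv) (intro DERIV_cmult pd_deriv assms)

lemma pd_const: "pd v (\<lambda>q. c) p = 0"
  unfolding pd_def by (rule DERIV_imp_deriv) simp

lemma pd_zero_off:
  assumes "compact K" "\<And>q. q \<notin> K \<Longrightarrow> f q = 0" "p \<notin> K"
  shows "pd v f p = 0"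
proof -
  have "pd v f p = pd v (\<lambda>q. 0) p"
    by (rule pd_local[of "- K"]) (use assms compact_imp_closed in auto)
  thus ?thesis by (simp add: pd_const)
qed

lemma Ck_mono: "Ck k U f \<Longrightarrow> V \<subseteq> U \<Longrightarrow> Ck k V f"
  by (induction k arbitrary: f) (auto intro: continuous_on_subset)

lemma open_Dom: "open (Dom :: 'n::finite pt set)"
  unfolding Dom_def by (intro open_Times) auto

lemma ext_cont:
  fixes h :: "'a::t2_space \<Rightarrow> real"
  assumes "open U" "continuous_on U h" "compact K" "K \<subseteq> U" "\<And>p. p \<notin> K \<Longrightarrow> h p = 0"
  shows "continuous_on UNIV h"
proof -
  have "continuous_on (- K) h"
    using continuous_on_const[of "- K" 0] by (rule continuous_on_cong[THEN iffD1, rotated 2]) (use assms in auto)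
  hence "continuous_on (U \<union> - K) h"
    using assms by (intro continuous_on_open_Un) (auto intro!: closed_open[THEN iffD1] compact_imp_closed)
  moreover have "U \<union> - K = UNIV" using assms by auto
  ultimately show ?thesis by simp
qed

definition C1 :: "('n::finite pt \<Rightarrow> real) \<Rightarrow> bool" where
  "C1 f \<longleftrightarrow> continuous_on Dom f \<and> (\<forall>p\<in>Dom. f differentiable (at p)) \<and> (\<forall>v. continuous_on Dom (pd v f))"


lemma smooth_C1:
  assumes "smooth_on Dom f" shows "C1 f" "C1 (pd v f)"
proof -
  have 0: "Ck 0 Dom f" and 1: "Ck (Suc 0) Dom f" and 2: "Ck (Suc (Suc 0)) Dom f"
    using assms unfolding smooth_on_def by blast+
  show "C1 f" using 0 1 unfolding C1_def by (simp only: Ck.simps) blast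
  show "C1 (pd v f)" using 1 2 unfolding C1_def by (simp only: Ck.simps) blast
qed

lemma smooth_UNIV_C1:
  assumes "smooth_on UNIV f" shows "C1 f" "C1 (pd v f)"
proof -
  have "smooth_on Dom f" using assms Ck_mono unfolding smooth_on_def by blast
  thus "C1 f" "C1 (pd v f)" by (rule smooth_C1)+
qed

lemma C1_cont: "C1 f \<Longrightarrow> continuous_on Dom f" unfolding C1_def by blast
lemma C1_diff: "C1 f \<Longrightarrow> p \<in> Dom \<Longrightarrow> f differentiable (at p)" unfolding C1_def by blast
lemma C1_pd_cont: "C1 f \<Longrightarrow> continuous_on Dom (pd v f)" unfolding C1_def by blast

lemma C1_const: "C1 (\<lambda>p. c)"
  unfolding C1_def by (auto simp: pd_const)

lemma C1_add: assumes "C1 f" "C1 g" shows "C1 (\<lambda>p. f p + g p)"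
proof -
  have "continuous_on Dom (pd v (\<lambda>p. f p + g p))" for v
  proof -
    have "continuous_on Dom (\<lambda>p. pd v f p + pd v g p)"
      using assms by (intro continuous_intros C1_pd_cont)
    thus ?thesis by (rule continuous_on_cong[THEN iffD1, rotated 2])
       (use assms in \<open>auto simp: pd_add C1_diff\<close>)
  qed
  thus ?thesis using assms unfolding C1_def by (auto intro!: continuous_intros)
qed

lemma C1_diff': assumes "C1 f" "C1 g" shows "C1 (\<lambda>p. f p - g p)"
proof -
  have "continuous_on Dom (pd v (\<lambda>p. f p - g p))" for v
  proof -
    have "continuous_on Dom (\<lambda>p. pd v f p - pd v g p)"
      using assms by (intro continuous_intros C1_pd_cont)
    thus ?thesis by (rule continuous_on_cong[THEN iffD1, rotated 2])
       (use assms in \<open>auto simp: pd_diff C1_diff\<close>)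
  qed
  thus ?thesis using assms unfolding C1_def by (auto intro!: continuous_intros)
qed

lemma C1_mult: assumes "C1 f" "C1 g" shows "C1 (\<lambda>p. f p * g p)"
proof -
  have "continuous_on Dom (pd v (\<lambda>p. f p * g p))" for v
  proof -
    have "continuous_on Dom (\<lambda>p. pd v f p * g p + f p * pd v g p)"
      using assms by (intro continuous_intros C1_pd_cont C1_cont)
    thus ?thesis by (rule continuous_on_cong[THEN iffD1, rotated 2])
       (use assms in \<open>auto simp: pd_mult C1_diff\<close>)
  qed
  thus ?thesis using assms unfolding C1_def by (auto intro!: continuous_intros)
qed

lemma C1_cmult: "C1 f \<Longrightarrow> C1 (\<lambda>p. c * f p)"
  using C1_mult[OF C1_const] by blast

lemma C1_sum: "(\<And>i. i \<in> I \<Longrightarrow> C1 (f i)) \<Longrightarrow> C1 (\<lambda>p. \<Sum>i\<in>I. f i p)"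
proof (induction I rule: infinite_finite_induct)
  case (infinite I) thus ?case by (simp add: C1_const)
next
  case empty thus ?case by (simp add: C1_const)
next
  case (insert x F) thus ?case by (simp add: C1_add)
qed


lemma lint_cbox:
  fixes g :: "'a::euclidean_space \<Rightarrow> real"
  assumes "continuous_on UNIV g" "\<And>x. x \<notin> cbox a b \<Longrightarrow> g x = 0"
  shows "integrable lborel g" "integral\<^sup>L lborel g = integral (cbox a b) g"
proof -
  have eq: "(\<lambda>x. indicator (cbox a b) x *\<^sub>R g x) = g"
    using assms(2) by (auto simp: fun_eq_iff split: split_indicator)
  have si: "set_integrable lborel (cbox a b) g"
    unfolding set_integrable_def
    by (rule borel_integrable_compact) (auto intro: continuous_on_subset[OF assms(1)])
  thus "integrable lborel g" unfolding set_integrable_def eq .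
  show "integral\<^sup>L lborel g = integral (cbox a b) g"
    using set_borel_integral_eq_integral(2)[OF si] unfolding set_lebesgue_integral_def eq .
qed

lemma lint_shift:
  fixes g :: "'a::euclidean_space \<Rightarrow> real"
  assumes "continuous_on UNIV g"
  shows "integral\<^sup>L lborel (\<lambda>x. g (x + c)) = integral\<^sup>L lborel g"
proof -
  have m: "g \<in> borel_measurable borel" using assms by (rule borel_measurable_continuous_onI)
  have "integral\<^sup>L lborel g = integral\<^sup>L (distr lborel borel ((+) c)) g"
    by (simp add: lborel_distr_plus)
  also have "\<dots> = integral\<^sup>L lborel (\<lambda>x. g (c + x))"
    by (rule integral_distr) (auto simp: m)
  finally show ?thesis by (simp add: add.commute)
qed

lemma cbox_shift_out:
  fixes a b x u :: "'a::euclidean_space"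
  assumes "u \<in> Basis" "x \<notin> cbox (a - \<Sum>Basis) (b + \<Sum>Basis)" "\<bar>h\<bar> \<le> 1"
  shows "x + h *\<^sub>R u \<notin> cbox a b"
proof
  assume "x + h *\<^sub>R u \<in> cbox a b"
  hence H: "\<And>j. j \<in> Basis \<Longrightarrow> a \<bullet> j \<le> x \<bullet> j + h * (u \<bullet> j) \<and> x \<bullet> j + h * (u \<bullet> j) \<le> b \<bullet> j"
    by (auto simp: mem_box inner_add_left)
  have "x \<in> cbox (a - \<Sum>Basis) (b + \<Sum>Basis)"
    unfolding mem_box
  proof safe
    fix j :: 'a assume j: "j \<in> Basis"
    have "\<bar>u \<bullet> j\<bar> \<le> 1" using assms(1) j by (auto simp: inner_Basis)
    hence "\<bar>h * (u \<bullet> j)\<bar> \<le> 1" using assms(3) by (simp add: abs_mult mult_le_one)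
    hence "h * (u \<bullet> j) \<le> 1" "-1 \<le> h * (u \<bullet> j)" by auto
    moreover have "(a - \<Sum>Basis) \<bullet> j = a \<bullet> j - 1" "(b + \<Sum>Basis) \<bullet> j = b \<bullet> j + 1"
      using j by (auto simp: inner_diff_left inner_add_left)
    ultimately show "(a - \<Sum>Basis) \<bullet> j \<le> x \<bullet> j" "x \<bullet> j \<le> (b + \<Sum>Basis) \<bullet> j"
      using H[OF j] by linarith+
  qed
  with assms(2) show False by blast
qed

lemma ibp0:
  fixes g D :: "'a::euclidean_space \<Rightarrow> real"
  assumes u: "u \<in> Basis"
    and der: "\<And>x. ((\<lambda>h. g (x + h *\<^sub>R u)) has_real_derivative D x) (at 0)"
    and cg: "continuous_on UNIV g" and cD: "continuous_on UNIV D"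
    and zg: "\<And>x. x \<notin> cbox a b \<Longrightarrow> g x = 0" and zD: "\<And>x. x \<notin> cbox a b \<Longrightarrow> D x = 0"
  shows "integral\<^sup>L lborel D = 0"
proof -
  define a' where "a' = a - \<Sum>Basis"
  define b' where "b' = b + \<Sum>Basis"
  define \<Phi> where "\<Phi> h = integral (cbox a' b') (\<lambda>x. g (x + h *\<^sub>R u))" for h
  define U where "U = {-1<..<(1::real)}"
  have cgs: "continuous_on UNIV (\<lambda>x. g (x + c))" for c
    by (rule continuous_on_compose2[OF cg]) (auto intro!: continuous_intros)
  have const: "\<Phi> h = integral\<^sup>L lborel g" if "h \<in> U" for h
  proof -
    have "\<Phi> h = integral\<^sup>L lborel (\<lambda>x. g (x + h *\<^sub>R u))"
      unfolding \<Phi>_def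
      by (rule lint_cbox(2)[symmetric, OF cgs]) 
         (use that zg cbox_shift_out[OF u] in \<open>auto simp: a'_def b'_def U_def\<close>)
    also have "\<dots> = integral\<^sup>L lborel g" by (rule lint_shift[OF cg])
    finally show ?thesis .
  qed
  have derh: "((\<lambda>h. g (x + h *\<^sub>R u)) has_real_derivative D (x + h0 *\<^sub>R u)) (at h0)" for x h0
  proof -
    have "((\<lambda>h. g ((x + h0 *\<^sub>R u) + h *\<^sub>R u)) has_real_derivative D (x + h0 *\<^sub>R u)) (at 0)"
      by (rule der)
    hence "((\<lambda>h. g (x + (h + h0) *\<^sub>R u)) has_real_derivative D (x + h0 *\<^sub>R u)) (at 0)"
      by (simp add: algebra_simps)
    hence "((\<lambda>h. g (x + h *\<^sub>R u)) has_real_derivative D (x + h0 *\<^sub>R u)) (at (0 + h0))"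
      using DERIV_shift[where f="\<lambda>h. g (x + h *\<^sub>R u)" and x=0 and z=h0] by simp
    thus ?thesis by simp
  qed
  have "(\<Phi> has_field_derivative integral (cbox a' b') (\<lambda>x. D (x + 0 *\<^sub>R u))) (at 0 within U)"
    unfolding \<Phi>_def
  proof (rule leibniz_rule_field_derivative[where fx="\<lambda>h x. D (x + h *\<^sub>R u)"])
    show "((\<lambda>h. g (x + h *\<^sub>R u)) has_field_derivative D (x + h *\<^sub>R u)) (at h within U)" for h x
      using derh by (rule has_field_derivative_at_within)
    show "(\<lambda>x. g (x + h *\<^sub>R u)) integrable_on cbox a' b'" for h
      by (rule integrable_continuous) (rule continuous_on_subset[OF cgs], auto)
    have "continuous_on UNIV (\<lambda>z::real\<times>'a. D (snd z + fst z *\<^sub>R u))"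
      by (rule continuous_on_compose2[OF cD]) (auto intro!: continuous_intros)
    thus "continuous_on (U \<times> cbox a' b') (\<lambda>(h, x). D (x + h *\<^sub>R u))"
      by (auto simp: case_prod_unfold intro: continuous_on_subset)
    show "0 \<in> U" "convex U" by (auto simp: U_def)
  qed
  moreover have "at (0::real) within U = at 0"
    by (rule at_within_open) (auto simp: U_def)
  ultimately have d1: "(\<Phi> has_field_derivative integral (cbox a' b') D) (at 0)"
    by simp
  have "((\<lambda>_. integral\<^sup>L lborel g) has_field_derivative 0) (at 0)" by (rule DERIV_const)
  moreover have "open U" "(0::real) \<in> U" by (auto simp: U_def)
  ultimately have d2: "(\<Phi> has_field_derivative 0) (at 0)"
    using has_field_derivative_transform_within_open const by metis
  have "integral (cbox a' b') D = 0" using DERIV_unique[OF d1 d2] .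
  moreover have "integral\<^sup>L lborel D = integral (cbox a' b') D"
  proof (rule lint_cbox(2)[OF cD])
    fix x assume "x \<notin> cbox a' b'"
    hence "x + 0 *\<^sub>R u \<notin> cbox a b" using cbox_shift_out[OF u, of x a b 0] by (auto simp: a'_def b'_def)
    thus "D x = 0" using zD by simp
  qed
  ultimately show ?thesis by simp
qed


lemma xint_nice:
  fixes h :: "'n::finite pt \<Rightarrow> real"
  assumes c: "continuous_on UNIV h" and z: "\<And>s t x. x \<notin> cbox a b \<Longrightarrow> h (s,t,x) = 0"
  shows "integrable lborel (\<lambda>x. h (s,t,x))" "xint h s t = integral (cbox a b) (\<lambda>x. h (s,t,x))"
    and "continuous_on UNIV (\<lambda>z. xint h (fst z) (snd z))"
proof -
  have cs: "continuous_on UNIV (\<lambda>x. h (s,t,x))" for s t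
    by (rule continuous_on_compose2[OF c]) (auto intro!: continuous_intros)
  show "integrable lborel (\<lambda>x. h (s,t,x))" by (rule lint_cbox(1)[OF cs z])
  have eq: "xint h s t = integral (cbox a b) (\<lambda>x. h (s,t,x))" for s t
    unfolding xint_def by (rule lint_cbox(2)[OF cs z])
  thus "xint h s t = integral (cbox a b) (\<lambda>x. h (s,t,x))" .
  have "continuous_on UNIV (\<lambda>z. integral (cbox a b) (\<lambda>x. h (fst z, snd z, x)))"
  proof (rule integral_continuous_on_param)
    have "continuous_on UNIV (\<lambda>w::(real\<times>real)\<times>(real^'n). h (fst (fst w), snd (fst w), snd w))"
      by (rule continuous_on_compose2[OF c]) (auto intro!: continuous_intros)
    thus "continuous_on (UNIV \<times> cbox a b) (\<lambda>(z, x). h (fst z, snd z, x))"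
      by (auto simp: case_prod_unfold intro: continuous_on_subset)
  qed
  thus "continuous_on UNIV (\<lambda>z. xint h (fst z) (snd z))" by (simp add: eq)
qed

lemma Dom_iff: "(s, t, x) \<in> Dom \<longleftrightarrow> s \<in> {0<..<1} \<and> t \<in> {0<..<1}"
  by (auto simp: Dom_def)

lemma ibp:
  fixes \<Phi> :: "'n::finite pt \<Rightarrow> real" and W :: "'n pt \<Rightarrow> real^'n"
  assumes st: "s \<in> {0<..<1}" "t \<in> {0<..<1}"
    and C\<Phi>: "C1 \<Phi>" and CW: "\<And>i. C1 (\<lambda>q. W q $ i)"
    and K: "compact K" "K \<subseteq> Dom" and box: "\<And>p. p \<in> K \<Longrightarrow> snd (snd p) \<in> cbox a b"
    and supp: "(\<forall>p. p \<notin> K \<longrightarrow> \<Phi> p = 0) \<or> (\<forall>p. p \<notin> K \<longrightarrow> (\<forall>i. W p $ i = 0))"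
  shows "xint (\<lambda>p. \<Phi> p * divg W p) s t + xint (\<lambda>p. grad \<Phi> p \<bullet> W p) s t = 0"
proof -
  define e where "e i = ((0::real), (0::real), axis i (1::real) :: real^'n)" for i
  define F where "F i q = \<Phi> q * W q $ i" for i q
  have CF: "C1 (F i)" for i unfolding F_def by (intro C1_mult C\<Phi> CW)
  have Fz: "F i p = 0" if "p \<notin> K" for i p
    using supp that unfolding F_def by (metis mult_eq_0_iff)
  have pdF: "pd (e i) (F i) p = pd (e i) \<Phi> p * W p $ i + \<Phi> p * pd (e i) (\<lambda>q. W q $ i) p"
    if "p \<in> Dom" for i p
    unfolding F_def using that by (intro pd_mult C1_diff C\<Phi> CW)
  have pdFz: "pd (e i) (F i) p = 0" if "p \<notin> K" for i p
    by (rule pd_zero_off[OF K(1) Fz that])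
  have cpdF: "continuous_on UNIV (pd (e i) (F i))" for i
    by (rule ext_cont[OF open_Dom C1_pd_cont[OF CF] K pdFz])
  have notK: "(s', t', x) \<notin> K" if "x \<notin> cbox a b" for x s' t'
    using box that by force
  have int0: "integral\<^sup>L lborel (\<lambda>x. pd (e i) (F i) (s,t,x)) = 0" for i
  proof (rule ibp0[where u="axis i 1" and g="\<lambda>x. F i (s,t,x)" and a=a and b=b])
    show "axis i (1::real) \<in> Basis" by simp
    show "((\<lambda>h. F i (s, t, x + h *\<^sub>R axis i 1)) has_real_derivative pd (e i) (F i) (s, t, x)) (at 0)" for x
      using pd_deriv[OF C1_diff[OF CF], where p="(s,t,x)" and v="e i"] st by (simp add: e_def Dom_iff)
    show "continuous_on UNIV (\<lambda>x. F i (s, t, x))"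
      by (rule continuous_on_compose2[OF ext_cont[OF open_Dom C1_cont[OF CF] K Fz]])
         (auto intro!: continuous_intros)
    show "continuous_on UNIV (\<lambda>x. pd (e i) (F i) (s, t, x))"
      by (rule continuous_on_compose2[OF cpdF]) (auto intro!: continuous_intros)
    show "F i (s, t, x) = 0" if "x \<notin> cbox a b" for x using Fz notK that by blast
    show "pd (e i) (F i) (s, t, x) = 0" if "x \<notin> cbox a b" for x using pdFz notK that by blast
  qed
  have z1: "pd (e i) \<Phi> p * W p $ i = 0" if "p \<notin> K" for p i
      using supp that pd_zero_off[OF K(1), of \<Phi> p "e i"] by (metis mult_eq_0_iff)
  have z2: "\<Phi> p * pd (e i) (\<lambda>q. W q $ i) p = 0" if "p \<notin> K" for p i
      using supp that pd_zero_off[OF K(1), of "\<lambda>q. W q $ i" p "e i"] by (metis mult_eq_0_iff)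
  have cont1: "continuous_on UNIV (\<lambda>p. pd (e i) \<Phi> p * W p $ i)" for i
  proof (rule ext_cont[OF open_Dom _ K])
    show "continuous_on Dom (\<lambda>p. pd (e i) \<Phi> p * W p $ i)"
      by (intro continuous_intros C1_pd_cont C1_cont C\<Phi> CW)
    show "pd (e i) \<Phi> p * W p $ i = 0" if "p \<notin> K" for p
      using supp that pd_zero_off[OF K(1), of \<Phi> p "e i"] by (metis mult_eq_0_iff)
  qed
  have cont2: "continuous_on UNIV (\<lambda>p. \<Phi> p * pd (e i) (\<lambda>q. W q $ i) p)" for i
  proof (rule ext_cont[OF open_Dom _ K])
    show "continuous_on Dom (\<lambda>p. \<Phi> p * pd (e i) (\<lambda>q. W q $ i) p)"
      by (intro continuous_intros C1_pd_cont C1_cont C\<Phi> CW)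
    show "\<Phi> p * pd (e i) (\<lambda>q. W q $ i) p = 0" if "p \<notin> K" for p
      using supp that pd_zero_off[OF K(1), of "\<lambda>q. W q $ i" p "e i"] by (metis mult_eq_0_iff)
  qed
  have i1: "integrable lborel (\<lambda>x. pd (e i) \<Phi> (s,t,x) * W (s,t,x) $ i)" for i
    by (rule xint_nice(1)[OF cont1, of a b]) (use notK z1 in blast)
  have i2: "integrable lborel (\<lambda>x. \<Phi> (s,t,x) * pd (e i) (\<lambda>q. W q $ i) (s,t,x))" for i
    by (rule xint_nice(1)[OF cont2, of a b]) (use notK z2 in blast)
  have "xint (\<lambda>p. \<Phi> p * divg W p) s t + xint (\<lambda>p. grad \<Phi> p \<bullet> W p) s t
      = (\<Sum>i\<in>UNIV. integral\<^sup>L lborel (\<lambda>x. \<Phi> (s,t,x) * pd (e i) (\<lambda>q. W q $ i) (s,t,x)))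
      + (\<Sum>i\<in>UNIV. integral\<^sup>L lborel (\<lambda>x. pd (e i) \<Phi> (s,t,x) * W (s,t,x) $ i))"
  proof -
    have a1: "(\<lambda>x. \<Phi> (s,t,x) * divg W (s,t,x)) = (\<lambda>x. \<Sum>i\<in>UNIV. \<Phi> (s,t,x) * pd (e i) (\<lambda>q. W q $ i) (s,t,x))"
      by (simp add: divg_def e_def sum_distrib_left)
    have a2: "(\<lambda>x. grad \<Phi> (s,t,x) \<bullet> W (s,t,x)) = (\<lambda>x. \<Sum>i\<in>UNIV. pd (e i) \<Phi> (s,t,x) * W (s,t,x) $ i)"
      by (simp add: grad_def inner_vec_def e_def)
    show ?thesis unfolding xint_def a1 a2
      by (simp add: Bochner_Integration.integral_sum i1 i2)
  qed
  also have "\<dots> = (\<Sum>i\<in>UNIV. integral\<^sup>L lborel (\<lambda>x. pd (e i) (F i) (s,t,x)))"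
    unfolding sum.distrib[symmetric]
  proof (rule sum.cong[OF refl])
    fix i
    have "integral\<^sup>L lborel (\<lambda>x. pd (e i) (F i) (s,t,x)) = integral\<^sup>L lborel (\<lambda>x. 
       pd (e i) \<Phi> (s,t,x) * W (s,t,x) $ i + \<Phi> (s,t,x) * pd (e i) (\<lambda>q. W q $ i) (s,t,x))"
      using st by (intro Bochner_Integration.integral_cong refl pdF) (simp add: Dom_iff)
    also have "\<dots> = integral\<^sup>L lborel (\<lambda>x. pd (e i) \<Phi> (s,t,x) * W (s,t,x) $ i)
       + integral\<^sup>L lborel (\<lambda>x. \<Phi> (s,t,x) * pd (e i) (\<lambda>q. W q $ i) (s,t,x))"
      by (rule Bochner_Integration.integral_add[OF i1 i2])
    finally show "integral\<^sup>L lborel (\<lambda>x. \<Phi> (s,t,x) * pd (e i) (\<lambda>q. W q $ i) (s,t,x)) +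
      integral\<^sup>L lborel (\<lambda>x. pd (e i) \<Phi> (s,t,x) * W (s,t,x) $ i) =
      integral\<^sup>L lborel (\<lambda>x. pd (e i) (F i) (s,t,x))" by simp
  qed
  also have "\<dots> = 0" by (simp add: int0)
  finally show ?thesis .
qed


lemma sqrt_est:
  fixes B c A e a b :: real
  assumes c: "c > 0" and Bc: "B \<ge> c" and a: "\<bar>a\<bar> \<le> A" and b: "\<bar>b\<bar> \<le> A"
    and e1: "\<bar>e\<bar> \<le> 1" and e2: "\<bar>e\<bar> * (2*A) \<le> c^2/2"
  shows "\<bar>sqrt (B^2 + e*a + e^2*b) - B - e*a/(2*B)\<bar> \<le> (2*A^2/c^3 + A/(2*c)) * e^2"
proof -
  define u where "u = e*a + e^2*b"
  have A0: "A \<ge> 0" using a by linarith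
  have B0: "B > 0" using c Bc by linarith
  have "\<bar>e^2*b\<bar> \<le> \<bar>e\<bar> * A"
  proof -
    have "\<bar>e^2*b\<bar> = \<bar>e\<bar> * (\<bar>e\<bar> * \<bar>b\<bar>)" by (simp add: abs_mult power2_eq_square)
    also have "\<dots> \<le> \<bar>e\<bar> * (1 * A)"
      by (intro mult_left_mono mult_mono) (use e1 b in auto)
    finally show ?thesis by simp
  qed
  moreover have "\<bar>e*a\<bar> \<le> \<bar>e\<bar> * A" by (simp add: abs_mult mult_left_mono a)
  ultimately have "\<bar>u\<bar> \<le> \<bar>e\<bar> * A + \<bar>e\<bar> * A" unfolding u_def using abs_triangle_ineq[of "e*a" "e^2*b"] by linarith
  hence u: "\<bar>u\<bar> \<le> 2*A*\<bar>e\<bar>" by (simp add: algebra_simps)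
  have "c^2 \<le> B^2" using c Bc by (simp add: power_mono)
  hence Q: "B^2 + u \<ge> B^2/2" using u e2 by (simp add: algebra_simps)
  define r where "r = sqrt (B^2 + u)"
  have "B^2 > 0" using B0 by simp
  hence Qp: "B^2 + u > 0" using Q by linarith
  have r0: "r > 0" unfolding r_def using Qp by simp
  have rr: "r^2 = B^2 + u" unfolding r_def using Qp by simp
  have key: "r - B - u/(2*B) = - (u^2 / (2*B*(r+B)^2))"
  proof -
    have h1: "r - B = u/(r+B)" using rr r0 B0 by (simp add: field_simps power2_eq_square) 
    hence h2: "B - r = -(u/(r+B))" by linarith
    have "r - B - u/(2*B) = u/(r+B) - u/(2*B)" using h1 by simp
    also have "\<dots> = u*(B - r)/(2*B*(r+B))" using r0 B0 by (simp add: field_simps)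
    also have "\<dots> = -(u^2/(2*B*(r+B)^2))" unfolding h2 using r0 B0 by (simp add: field_simps power2_eq_square)
    finally show ?thesis .
  qed
  have "\<bar>r - B - u/(2*B)\<bar> = u^2 / (2*B*(r+B)^2)" using key r0 B0 by simp
  also have "\<dots> \<le> u^2 / (2*B*B^2)"
    using r0 B0 by (intro divide_left_mono mult_left_mono power_mono) auto
  also have "\<dots> \<le> (2*A*\<bar>e\<bar>)^2 / (2*c*c^2)"
  proof (rule frac_le)
    show "u^2 \<le> (2*A*\<bar>e\<bar>)^2" using u by (metis abs_ge_zero abs_le_square_iff order_trans power2_abs abs_of_nonneg)
    show "0 < 2*c*c^2" using c by simp
    show "2*c*c^2 \<le> 2*B*B^2" using c Bc by (intro mult_mono power_mono) auto
  qed (simp)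
  also have "\<dots> = 2*A^2/c^3 * e^2" using c by (simp add: field_simps power2_eq_square power3_eq_cube)
  finally have t1: "\<bar>r - B - u/(2*B)\<bar> \<le> 2*A^2/c^3 * e^2" .
  have t2: "\<bar>e^2*b/(2*B)\<bar> \<le> A/(2*c) * e^2"
  proof -
    have "\<bar>e^2*b/(2*B)\<bar> = e^2 * \<bar>b\<bar> / (2*B)" using B0 by (simp add: abs_mult)
    also have "\<dots> \<le> e^2 * A / (2*c)"
      using B0 c Bc b by (intro frac_le mult_left_mono) auto
    finally show ?thesis by (simp add: mult.commute)
  qed
  have eq: "sqrt (B^2 + e*a + e^2*b) - B - e*a/(2*B) = (r - B - u/(2*B)) + e^2*b/(2*B)"
    unfolding r_def u_def using B0 by (simp add: field_simps add.assoc)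
  have "\<bar>sqrt (B^2 + e*a + e^2*b) - B - e*a/(2*B)\<bar> \<le> \<bar>r - B - u/(2*B)\<bar> + \<bar>e^2*b/(2*B)\<bar>"
    unfolding eq by (rule abs_triangle_ineq)
  also have "\<dots> \<le> (2*A^2/c^3 + A/(2*c)) * e^2" using t1 t2 by (simp add: algebra_simps)
  finally show ?thesis .
qed


lemma fubini_lborel:
  fixes h :: "real \<times> real \<Rightarrow> real"
  assumes "integrable lborel h"
  shows "(\<integral>s. (\<integral>t. h (s,t) \<partial>lborel) \<partial>lborel) = integral\<^sup>L lborel h"
proof -
  have "integrable (lborel \<Otimes>\<^sub>M lborel) h" using assms by (simp add: lborel_prod)
  from lborel_pair.integral_fst'[OF this] show ?thesis by (simp add: lborel_prod)
qed

lemma lag_quad: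
  fixes F :: "real \<Rightarrow> real \<Rightarrow> real \<Rightarrow> real" and Bz a b C :: "real \<Rightarrow> real \<Rightarrow> real"
    and KK :: "(real \<times> real) set"
  defines "Sq \<equiv> {0<..<1::real} \<times> {0<..<1::real}"
  assumes Bint: "set_integrable lborel ({0..1} \<times> {0..1}) (\<lambda>(s,t). Bz s t)"
    and Bpos: "\<And>s t. (s,t) \<in> Sq \<Longrightarrow> Bz s t > 0"
    and cB: "continuous_on Sq (\<lambda>z. Bz (fst z) (snd z))"
    and ca: "continuous_on Sq (\<lambda>z. a (fst z) (snd z))"
    and cb: "continuous_on Sq (\<lambda>z. b (fst z) (snd z))"
    and cC: "continuous_on Sq (\<lambda>z. C (fst z) (snd z))"
    and KK: "compact KK" "KK \<subseteq> Sq"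
    and zer: "\<And>s t. (s,t) \<in> Sq \<Longrightarrow> (s,t) \<notin> KK \<Longrightarrow> a s t = 0 \<and> b s t = 0 \<and> C s t = 0"
    and F: "\<And>e s t. (s,t) \<in> Sq \<Longrightarrow> F e s t = sqrt ((Bz s t)^2 + e * a s t + e^2 * b s t) + e * C s t"
  shows "((\<lambda>e. set_lebesgue_integral lborel {0..1} (\<lambda>s. set_lebesgue_integral lborel {0..1} (\<lambda>t. F e s t)))
     has_real_derivative
     integral (cbox (0,0) (1,1)) (\<lambda>z. if z \<in> Sq then a (fst z) (snd z) / (2 * Bz (fst z) (snd z)) + C (fst z) (snd z) else 0)) (at 0)"
proof -
  define g where "g e z = (if z \<in> Sq then sqrt ((Bz (fst z) (snd z))^2 + e * a (fst z) (snd z) + e^2 * b (fst z) (snd z))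
      - Bz (fst z) (snd z) + e * C (fst z) (snd z) else 0)" for e z
  define d where "d z = (if z \<in> Sq then a (fst z) (snd z) / (2 * Bz (fst z) (snd z)) + C (fst z) (snd z) else 0)" for z
  define L where "L e = set_lebesgue_integral lborel {0..1} (\<lambda>s. set_lebesgue_integral lborel {0..1} (\<lambda>t. F e s t))" for e
  have oSq: "open Sq" unfolding Sq_def by (intro open_Times) auto
  have g0: "g e z = 0" if "z \<notin> KK" for e z
  proof (cases "z \<in> Sq")
    case True
    then obtain s t where z: "z = (s,t)" "(s,t) \<in> Sq" by (cases z) auto
    with that zer[OF z(2)] Bpos[OF z(2)] show ?thesis by (simp add: g_def)
  qed (simp add: g_def)
  have d0: "d z = 0" if "z \<notin> KK" for z
  proof (cases "z \<in> Sq")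
    case True
    then obtain s t where z: "z = (s,t)" "(s,t) \<in> Sq" by (cases z) auto
    with that zer[OF z(2)] show ?thesis by (simp add: d_def)
  qed (simp add: d_def)
  have Bpos': "Bz (fst z) (snd z) > 0" if "z \<in> Sq" for z using Bpos[of "fst z" "snd z"] that by simp
  have gc: "continuous_on UNIV (g e)" for e
  proof (rule ext_cont[OF oSq _ KK g0])
    have "continuous_on Sq (\<lambda>z. sqrt ((Bz (fst z) (snd z))^2 + e * a (fst z) (snd z) + e^2 * b (fst z) (snd z))
      - Bz (fst z) (snd z) + e * C (fst z) (snd z))"
      by (intro continuous_intros cB ca cb cC)
    thus "continuous_on Sq (g e)" by (rule continuous_on_cong[THEN iffD1, rotated 2]) (auto simp: g_def)
  qed
  have dc: "continuous_on UNIV d"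
  proof (rule ext_cont[OF oSq _ KK d0])
    have "continuous_on Sq (\<lambda>z. a (fst z) (snd z) / (2 * Bz (fst z) (snd z)) + C (fst z) (snd z))"
      by (intro continuous_intros cB ca cb cC) (auto dest!: Bpos)
    thus "continuous_on Sq d" by (rule continuous_on_cong[THEN iffD1, rotated 2]) (auto simp: d_def)
  qed
  have Sqbox: "z \<in> cbox (0,0) (1,1)" if "z \<in> Sq" for z :: "real \<times> real"
    using that by (cases z) (auto simp: Sq_def)
  obtain c A where c: "c > 0" and A: "A \<ge> 0"
    and cK: "\<And>z. z \<in> KK \<Longrightarrow> Bz (fst z) (snd z) \<ge> c"
    and AK: "\<And>z. z \<in> KK \<Longrightarrow> \<bar>a (fst z) (snd z)\<bar> \<le> A \<and> \<bar>b (fst z) (snd z)\<bar> \<le> A"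
  proof (cases "KK = {}")
    case True thus ?thesis using that[of 1 0] by auto
  next
    case False
    have cB2: "continuous_on KK (\<lambda>z. Bz (fst z) (snd z))" using cB KK(2) by (rule continuous_on_subset)
    obtain z0 where z0: "z0 \<in> KK" "\<And>z. z \<in> KK \<Longrightarrow> Bz (fst z0) (snd z0) \<le> Bz (fst z) (snd z)"
      using continuous_attains_inf[OF KK(1) False cB2] by blast
    have cab: "continuous_on KK (\<lambda>z. \<bar>a (fst z) (snd z)\<bar> + \<bar>b (fst z) (snd z)\<bar>)"
      by (intro continuous_intros continuous_on_subset[OF ca KK(2)] continuous_on_subset[OF cb KK(2)])
    obtain z1 where z1: "z1 \<in> KK" "\<And>z. z \<in> KK \<Longrightarrow> \<bar>a (fst z) (snd z)\<bar> + \<bar>b (fst z) (snd z)\<bar>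
        \<le> \<bar>a (fst z1) (snd z1)\<bar> + \<bar>b (fst z1) (snd z1)\<bar>"
      using continuous_attains_sup[OF KK(1) False cab] by blast
    show ?thesis
    proof (rule that[of "Bz (fst z0) (snd z0)" "\<bar>a (fst z1) (snd z1)\<bar> + \<bar>b (fst z1) (snd z1)\<bar>"])
      show "Bz (fst z0) (snd z0) > 0" using Bpos' z0(1) KK(2) by auto
    next
      fix z assume "z \<in> KK"
      thus "Bz (fst z0) (snd z0) \<le> Bz (fst z) (snd z)" using z0 by blast
    next
      fix z assume "z \<in> KK"
      from z1(2)[OF this] show "\<bar>a (fst z) (snd z)\<bar> \<le> \<bar>a (fst z1) (snd z1)\<bar> + \<bar>b (fst z1) (snd z1)\<bar> \<and>
         \<bar>b (fst z) (snd z)\<bar> \<le> \<bar>a (fst z1) (snd z1)\<bar> + \<bar>b (fst z1) (snd z1)\<bar>" by linarith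
    qed simp
  qed
  define \<delta> where "\<delta> = min 1 (c^2 / (4 * (A + 1)))"
  define M where "M = 2*A^2/c^3 + A/(2*c)"
  have \<delta>0: "\<delta> > 0" using c A by (simp add: \<delta>_def)
  have M0: "M \<ge> 0" using c A by (simp add: M_def)
  have bound: "\<bar>g e z - e * d z\<bar> \<le> M * e^2" if e: "\<bar>e\<bar> \<le> \<delta>" for e z
  proof (cases "z \<in> KK")
    case False thus ?thesis using g0 d0 M0 by simp
  next
    case True
    hence zS: "z \<in> Sq" using KK by auto
    have "\<bar>e\<bar> * (2*A) \<le> c^2 / (4 * (A + 1)) * (2*A)"
      using e A by (intro mult_right_mono) (auto simp: \<delta>_def)
    also have "\<dots> \<le> c^2/2"
    proof -
      have "c^2 / (4 * (A + 1)) * (2*A) = c^2/2 * (A/(A+1))" using A by (simp add: field_simps)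
      also have "\<dots> \<le> c^2/2 * 1" using A by (intro mult_left_mono) auto
      finally show ?thesis by simp
    qed
    finally have e2: "\<bar>e\<bar> * (2*A) \<le> c^2/2" .
    have e1: "\<bar>e\<bar> \<le> 1" using e by (simp add: \<delta>_def)
    have "g e z - e * d z = sqrt ((Bz (fst z) (snd z))^2 + e * a (fst z) (snd z) + e^2 * b (fst z) (snd z))
      - Bz (fst z) (snd z) - e * a (fst z) (snd z) / (2 * Bz (fst z) (snd z))"
      using zS by (simp add: g_def d_def algebra_simps)
    also have "\<bar>\<dots>\<bar> \<le> M * e^2" unfolding M_def
      by (rule sqrt_est[OF c cK[OF True] conjunct1[OF AK[OF True]] conjunct2[OF AK[OF True]] e1 e2])
    finally show ?thesis .
  qed
  define \<psi> where "\<psi> e z = indicator Sq z * (Bz (fst z) (snd z) + g e z)" for e z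
  have \<psi>m: "\<psi> e \<in> borel_measurable borel" for e
  proof -
    have "(\<lambda>z. indicator Sq z *\<^sub>R (Bz (fst z) (snd z) + g e z)) \<in> borel_measurable borel"
      by (rule borel_measurable_continuous_on_indicator)
         (auto intro!: continuous_intros cB continuous_on_subset[OF gc] borel_open oSq)
    thus ?thesis by (simp add: \<psi>_def[abs_def])
  qed
  have g00: "g 0 z = 0" for z
  proof (cases "z \<in> Sq")
    case True
    have "Bz (fst z) (snd z) > 0" by (rule Bpos'[OF True])
    thus ?thesis by (simp add: g_def True)
  qed (simp add: g_def)
  have \<psi>0: "\<psi> 0 z = indicator Sq z * Bz (fst z) (snd z)" for z by (simp add: \<psi>_def g00)
  have \<psi>e: "\<psi> e z = \<psi> 0 z + g e z" for e z
    by (cases "z \<in> Sq") (simp_all add: \<psi>_def g00 g_def[of e])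
  have int0: "integrable lborel (\<psi> 0)"
  proof (rule Bochner_Integration.integrable_bound)
    show "integrable lborel (\<lambda>z. indicator ({0..1}\<times>{0..1}) z *\<^sub>R (case z of (s,t) \<Rightarrow> Bz s t))"
      using Bint unfolding set_integrable_def .
    show "\<psi> 0 \<in> borel_measurable lborel" using \<psi>m by simp
    show "AE z in lborel. norm (\<psi> 0 z) \<le> norm (indicator ({0..1}\<times>{0..1}) z *\<^sub>R (case z of (s,t) \<Rightarrow> Bz s t))"
    proof (rule AE_I2)
      fix z :: "real \<times> real"
      show "norm (\<psi> 0 z) \<le> norm (indicator ({0..1}\<times>{0..1}) z *\<^sub>R (case z of (s,t) \<Rightarrow> Bz s t))"
      proof (cases "z \<in> Sq")
        case True hence "z \<in> {0..1}\<times>{0..1}" by (auto simp: Sq_def)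
        with True show ?thesis by (simp add: \<psi>0 case_prod_unfold)
      next
        case False thus ?thesis by (simp add: \<psi>0)
      qed
    qed
  qed
  have gz: "g e z = 0" if "z \<notin> cbox (0,0) (1,1)" for e z
  proof -
    have "z \<notin> Sq" using that Sqbox by blast
    thus ?thesis by (simp add: g_def)
  qed
  have intg: "integrable lborel (g e)" for e by (rule lint_cbox(1)[OF gc gz])
  have intg2: "integral\<^sup>L lborel (g e) = integral (cbox (0,0) (1,1)) (g e)" for e
    by (rule lint_cbox(2)[OF gc gz])
  have \<psi>e': "\<psi> e = (\<lambda>z. \<psi> 0 z + g e z)" for e by (rule ext) (rule \<psi>e)
  have inte: "integrable lborel (\<psi> e)" for e
    by (subst \<psi>e'[of e]) (rule Bochner_Integration.integrable_add[OF int0 intg])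
  have m1: "(\<lambda>t. \<psi> e (s,t)) \<in> borel_measurable lborel" for e s
  proof -
    have "(\<lambda>t::real. (s,t)) \<in> borel_measurable borel"
      by (rule borel_measurable_continuous_onI) (auto intro!: continuous_intros)
    from measurable_compose[OF this \<psi>m] show ?thesis by simp
  qed
  have mI: "(\<lambda>s. \<integral>t. \<psi> e (s,t) \<partial>lborel) \<in> borel_measurable lborel" for e
  proof -
    have "case_prod (\<lambda>s t. \<psi> e (s,t)) \<in> borel_measurable (lborel \<Otimes>\<^sub>M lborel)"
      using \<psi>m[of e] by (simp add: lborel_prod)
    from lborel.borel_measurable_lebesgue_integral[OF this] show ?thesis .
  qed
  have iffy: "(\<lambda>t. f t) = (\<lambda>t. if t = 0 then f 0 else if t = 1 then f 1 else h t)"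
    if "\<And>t. t \<noteq> 0 \<Longrightarrow> t \<noteq> 1 \<Longrightarrow> f t = h t" for f h :: "real \<Rightarrow> real"
    using that by (auto simp: fun_eq_iff)
  have iffym: "(\<lambda>t. if t = 0 then c0 else if t = 1 then c1 else h t) \<in> borel_measurable lborel"
    if "h \<in> borel_measurable lborel" for h :: "real \<Rightarrow> real" and c0 c1
    using that by measurable
  have AE01: "AE t in lborel. t \<noteq> 0 \<and> t \<noteq> (1::real)"
    using AE_not_in[OF finite_imp_null_set_lborel[of "{0,1::real}"]] by simp
  have Lint: "L e = integral\<^sup>L lborel (\<psi> e)" for e
  proof -
    have inner: "set_lebesgue_integral lborel {0..1} (\<lambda>t. F e s t) = (\<integral>t. \<psi> e (s,t) \<partial>lborel)"
      if s: "s \<in> {0<..<1}" for s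
    proof -
      have pw: "indicator {0..1} t *\<^sub>R F e s t = \<psi> e (s,t)" if "t \<noteq> 0" "t \<noteq> 1" for t
      proof (cases "t \<in> {0<..<1}")
        case True
        hence st: "(s,t) \<in> Sq" using s by (simp add: Sq_def)
        show ?thesis using True st by (simp add: F[OF st] \<psi>_def g_def)
      next
        case False
        hence "t \<notin> {0..1}" using that by auto
        moreover have "(s,t) \<notin> Sq" using False by (simp add: Sq_def)
        ultimately show ?thesis by (simp add: \<psi>_def)
      qed
      have m2: "(\<lambda>t. indicator {0..1} t *\<^sub>R F e s t) \<in> borel_measurable lborel"
        by (subst iffy[OF pw]) (assumption | rule iffym[OF m1])+
      show ?thesis unfolding set_lebesgue_integral_def
        by (rule integral_cong_AE[OF m2 m1]) (rule AE_mp[OF AE01 AE_I2], blast intro: pw)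
    qed
    have pw: "indicator {0..1} s *\<^sub>R set_lebesgue_integral lborel {0..1} (\<lambda>t. F e s t) = (\<integral>t. \<psi> e (s,t) \<partial>lborel)"
      if "s \<noteq> 0" "s \<noteq> 1" for s
    proof (cases "s \<in> {0<..<1}")
      case True thus ?thesis by (simp add: inner)
    next
      case False
      hence "s \<notin> {0..1}" using that by auto
      moreover have "\<psi> e (s,t) = 0" for t
      proof -
        have "(s,t) \<notin> Sq" using False by (auto simp: Sq_def)
        thus ?thesis by (simp add: \<psi>_def)
      qed
      ultimately show ?thesis by simp
    qed
    have m2: "(\<lambda>s. indicator {0..1} s *\<^sub>R set_lebesgue_integral lborel {0..1} (\<lambda>t. F e s t)) \<in> borel_measurable lborel"
      by (subst iffy[OF pw]) (assumption | rule iffym[OF mI])+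
    have "L e = (\<integral>s. (\<integral>t. \<psi> e (s,t) \<partial>lborel) \<partial>lborel)"
      unfolding L_def set_lebesgue_integral_def[of _ _ "\<lambda>s. set_lebesgue_integral lborel {0..1} (\<lambda>t. F e s t)"]
      by (rule integral_cong_AE[OF m2 mI]) (rule AE_mp[OF AE01 AE_I2], blast intro: pw)
    also have "\<dots> = integral\<^sup>L lborel (\<psi> e)" by (rule fubini_lborel[OF inte])
    finally show ?thesis .
  qed
  have Ldiff: "L e - L 0 = integral (cbox (0,0) (1,1)) (g e)" for e
  proof -
    have "L e = integral\<^sup>L lborel (\<psi> 0) + integral\<^sup>L lborel (g e)"
      unfolding Lint by (subst \<psi>e'[of e]) (rule Bochner_Integration.integral_add[OF int0 intg])
    moreover have "L 0 = integral\<^sup>L lborel (\<psi> 0)" by (simp add: Lint)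
    ultimately show ?thesis by (simp add: intg2)
  qed
  define D where "D = integral (cbox (0,0) (1,1)) d"
  have cont1: "Henstock_Kurzweil_Integration.content (cbox (0::real,0::real) (1,1)) = 1" by (simp add: content_Pair)
  have est: "\<bar>integral (cbox (0,0) (1,1)) (g e) - e * D\<bar> \<le> M * e^2" if e: "\<bar>e\<bar> \<le> \<delta>" for e
  proof -
    have ig: "g e integrable_on cbox (0,0) (1,1)"
      by (rule integrable_continuous) (rule continuous_on_subset[OF gc], auto)
    have idd: "(\<lambda>z. e * d z) integrable_on cbox (0,0) (1,1)"
      by (rule integrable_continuous) (auto intro!: continuous_intros continuous_on_subset[OF dc])
    have "integral (cbox (0,0) (1,1)) (g e) - e * D = integral (cbox (0,0) (1,1)) (\<lambda>z. g e z - e * d z)"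
      unfolding D_def by (simp add: integral_diff[OF ig idd])
    also have "\<bar>\<dots>\<bar> \<le> M * e^2 * Henstock_Kurzweil_Integration.content (cbox (0::real,0::real) (1,1))"
      using has_integral_bound[OF _ integrable_integral[OF integrable_diff[OF ig idd]], of "M * e^2"]
        bound[OF e] M0 by simp
    finally show ?thesis by (simp add: cont1)
  qed
  have "((\<lambda>y. (L y - L 0)/y - D) \<longlongrightarrow> 0) (at 0)"
  proof (rule Lim_null_comparison[where g="\<lambda>y. M * \<bar>y\<bar>"])
    show "\<forall>\<^sub>F y in at 0. norm ((L y - L 0) / y - D) \<le> M * \<bar>y\<bar>"
      unfolding eventually_at
    proof (intro exI[of _ \<delta>] conjI ballI impI)
      show "\<delta> > 0" by (rule \<delta>0)
      fix y :: real assume "y \<in> UNIV" "y \<noteq> 0 \<and> dist y 0 < \<delta>"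
      hence y: "y \<noteq> 0" "\<bar>y\<bar> \<le> \<delta>" by auto
      define I where "I = integral (cbox (0::real,0::real) (1,1)) (g y)"
      have "(L y - L 0) / y - D = (I - y * D) / y"
        using y unfolding Ldiff I_def by (simp add: diff_divide_distrib)
      hence "norm ((L y - L 0) / y - D) = \<bar>I - y * D\<bar> / \<bar>y\<bar>" by simp
      also have "\<dots> \<le> M * y^2 / \<bar>y\<bar>" using est[OF y(2)] unfolding I_def by (rule divide_right_mono) simp
      also have "M * y^2 / \<bar>y\<bar> = M * \<bar>y\<bar>" using y(1) by (simp add: power2_eq_square field_simps)
      finally show "norm ((L y - L 0) / y - D) \<le> M * \<bar>y\<bar>" .
    qed
    have "((\<lambda>y. M * \<bar>y\<bar>) \<longlongrightarrow> M * \<bar>0\<bar>) (at 0)" by (intro tendsto_mult tendsto_const tendsto_rabs tendsto_ident_at)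
    thus "((\<lambda>y. M * \<bar>y\<bar>) \<longlongrightarrow> 0) (at 0)" by simp
  qed
  hence "((\<lambda>y. ((L y - L 0)/y - D) + D) \<longlongrightarrow> 0 + D) (at 0)" by (intro tendsto_add tendsto_const)
  hence "((\<lambda>y. (L y - L 0)/(y - 0)) \<longlongrightarrow> D) (at 0)" by simp
  hence "(L has_real_derivative D) (at 0)" by (simp add: has_field_derivative_iff)
  thus ?thesis unfolding L_def D_def d_def .
qed


definition C2 :: "('n::finite pt \<Rightarrow> real) \<Rightarrow> bool" where
  "C2 f \<longleftrightarrow> C1 f \<and> (\<forall>v. C1 (pd v f))"

lemma C2_smooth: "smooth_on Dom f \<Longrightarrow> C2 f"
  unfolding C2_def using smooth_C1 by blast
lemma C2_smooth_UNIV: "smooth_on UNIV f \<Longrightarrow> C2 f"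
  unfolding C2_def using smooth_UNIV_C1 by blast
lemma C2_C1: "C2 f \<Longrightarrow> C1 f" unfolding C2_def by blast
lemma C2_pd: "C2 f \<Longrightarrow> C1 (pd v f)" unfolding C2_def by blast

lemma grad_nth: "grad f p $ i = pd (0, 0, axis i 1) f p"
  by (simp add: grad_def)

lemma C1_grad: "C2 f \<Longrightarrow> C1 (\<lambda>p. grad f p $ i)"
  unfolding grad_nth by (rule C2_pd)

lemma C1_inner_grad: assumes "C2 f" "C2 g" shows "C1 (\<lambda>p. grad f p \<bullet> grad g p)"
proof -
  have "C1 (\<lambda>p. \<Sum>i\<in>UNIV. grad f p $ i * grad g p $ i)"
    by (intro C1_sum C1_mult C1_grad assms)
  thus ?thesis by (simp add: inner_vec_def)
qed

lemma xint_add: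
  assumes "integrable lborel (\<lambda>x. f (s,t,x))" "integrable lborel (\<lambda>x. g (s,t,x))"
  shows "xint (\<lambda>p. f p + g p) s t = xint f s t + xint g s t"
  unfolding xint_def using assms by simp

lemma xint_diff:
  assumes "integrable lborel (\<lambda>x. f (s,t,x))" "integrable lborel (\<lambda>x. g (s,t,x))"
  shows "xint (\<lambda>p. f p - g p) s t = xint f s t - xint g s t"
  unfolding xint_def using assms by simp

lemma xint_cmult: "xint (\<lambda>p. c * f p) s t = c * xint f s t"
  unfolding xint_def by simp

lemma xint_cong: "(\<And>x. f (s,t,x) = g (s,t,x)) \<Longrightarrow> xint f s t = xint g s t"
  unfolding xint_def by simp

lemma grad_lin:
  assumes "p \<in> Dom" "C1 f" "C1 g"
  shows "grad (\<lambda>q. f q + e * g q) p = grad f p + e *\<^sub>R grad g p"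
  unfolding grad_def using assms
  by (simp add: vec_eq_iff pd_add pd_cmult C1_diff differentiable_mult)

lemma pd_lin:
  assumes "p \<in> Dom" "C1 f" "C1 g"
  shows "pd v (\<lambda>q. f q + e * g q) p = pd v f p + e * pd v g p"
  using assms by (simp add: pd_add pd_cmult C1_diff differentiable_mult)

lemma divg_cont: "(\<And>i. C1 (\<lambda>q. V q $ i)) \<Longrightarrow> continuous_on Dom (divg V)"
  unfolding divg_def[abs_def] by (intro continuous_on_sum C1_pd_cont) auto

lemma divg_lin:
  assumes "p \<in> Dom" "\<And>i. C1 (\<lambda>q. V q $ i)" "\<And>i. C1 (\<lambda>q. U q $ i)"
  shows "divg (\<lambda>q. V q + e *\<^sub>R U q) p = divg V p + e * divg U p"
proof -
  have "pd v (\<lambda>q. V q $ i + e * U q $ i) p = pd v (\<lambda>q. V q $ i) p + e * pd v (\<lambda>q. U q $ i) p" for i v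
    by (rule pd_lin[OF assms])
  thus ?thesis by (simp add: divg_def sum.distrib sum_distrib_left)
qed

lemma divg_local:
  assumes "p \<in> Dom" "\<And>q. q \<in> Dom \<Longrightarrow> V q = U q"
  shows "divg V p = divg U p"
  unfolding divg_def
  by (intro sum.cong refl pd_local[OF open_Dom assms(1)]) (simp add: assms(2))

lemma divg_zero_off:
  assumes "compact K" "\<And>q. q \<notin> K \<Longrightarrow> V q = 0" "p \<notin> K"
  shows "divg V p = 0"
  unfolding divg_def using pd_zero_off[OF assms(1) _ assms(3)] assms(2) by simp

lemma C1_scaled_grad: "C1 \<rho> \<Longrightarrow> C2 f \<Longrightarrow> C1 (\<lambda>q. (\<rho> q *\<^sub>R grad f q) $ i)"
  by (simp add: C1_mult C1_grad)


lemma ftc_gen: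
  fixes \<phi> \<phi>' :: "real \<Rightarrow> real^'n \<Rightarrow> real"
  assumes der: "\<And>u x. ((\<lambda>u. \<phi> u x) has_real_derivative \<phi>' u x) (at u)"
    and c: "continuous_on UNIV (\<lambda>z. \<phi> (fst z) (snd z))"
    and c': "continuous_on UNIV (\<lambda>z. \<phi>' (fst z) (snd z))"
    and z0: "\<And>x. \<phi> 0 x = 0" and z1: "\<And>x. \<phi> 1 x = 0"
  shows "integral {0..1} (\<lambda>u. integral (cbox a b) (\<phi>' u)) = 0"
proof -
  define \<Psi> where "\<Psi> u = integral (cbox a b) (\<phi> u)" for u
  have d: "(\<Psi> has_field_derivative integral (cbox a b) (\<phi>' u)) (at u within UNIV)" for u
    unfolding \<Psi>_def
  proof (rule leibniz_rule_field_derivative[where fx=\<phi>'])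
    show "((\<lambda>u. \<phi> u x) has_field_derivative \<phi>' u' x) (at u' within UNIV)" for u' x using der by simp
    show "\<phi> u integrable_on cbox a b" for u
    proof -
      have "continuous_on UNIV (\<lambda>x. \<phi> (fst (u,x)) (snd (u,x)))"
        by (rule continuous_on_compose2[OF c]) (auto intro!: continuous_intros)
      hence "continuous_on (cbox a b) (\<phi> u)" by (simp add: continuous_on_subset[of UNIV])
      thus ?thesis by (rule integrable_continuous)
    qed
    show "continuous_on (UNIV \<times> cbox a b) (\<lambda>(u, x). \<phi>' u x)"
      using c' by (auto simp: case_prod_unfold intro: continuous_on_subset)
  qed auto
  have "((\<lambda>u. integral (cbox a b) (\<phi>' u)) has_integral \<Psi> 1 - \<Psi> 0) {0..1}"
  proof (rule fundamental_theorem_of_calculus)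
    show "(\<Psi> has_vector_derivative integral (cbox a b) (\<phi>' u)) (at u within {0..1})" for u
      using d[of u] by (simp add: has_real_derivative_iff_has_vector_derivative[symmetric] has_field_derivative_at_within)
  qed simp
  moreover have "\<phi> 1 = (\<lambda>x. 0)" "\<phi> 0 = (\<lambda>x. 0)" using z0 z1 by auto
  hence "\<Psi> 1 = 0" "\<Psi> 0 = 0" by (simp_all add: \<Psi>_def)
  ultimately show ?thesis by (simp add: integral_unique)
qed


locale kbox =
  fixes K :: "'n::finite pt set" and a b :: "real^'n"
  assumes K: "compact K" "K \<subseteq> Dom" and box: "\<And>p. p \<in> K \<Longrightarrow> snd (snd p) \<in> cbox a b"
begin

definition nice :: "('n pt \<Rightarrow> real) \<Rightarrow> bool" where
  "nice h \<longleftrightarrow> continuous_on Dom h \<and> (\<forall>p. p \<notin> K \<longrightarrow> h p = 0)"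

lemma notK: "x \<notin> cbox a b \<Longrightarrow> (s,t,x) \<notin> K" using box by force

lemma nice_cont: "nice h \<Longrightarrow> continuous_on UNIV h"
  unfolding nice_def by (intro ext_cont[OF open_Dom _ K]) auto

lemma nice_zero: "nice h \<Longrightarrow> x \<notin> cbox a b \<Longrightarrow> h (s,t,x) = 0"
  unfolding nice_def using notK by blast

lemma nice_int: "nice h \<Longrightarrow> integrable lborel (\<lambda>x. h (s,t,x))"
  by (rule xint_nice(1)[OF nice_cont]) (auto intro: nice_zero)

lemma nice_xcont: "nice h \<Longrightarrow> continuous_on UNIV (\<lambda>z. xint h (fst z) (snd z))"
  by (rule xint_nice(3)[OF nice_cont]) (auto intro: nice_zero)

lemma nice_cbox: "nice h \<Longrightarrow> xint h s t = integral (cbox a b) (\<lambda>x. h (s,t,x))"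
  by (rule xint_nice(2)[OF nice_cont]) (auto intro: nice_zero)

lemma nice_out: "nice h \<Longrightarrow> (\<And>x. (s,t,x) \<notin> K) \<Longrightarrow> xint h s t = 0"
  unfolding nice_def xint_def by simp

lemma nice_mult1: "continuous_on Dom f \<Longrightarrow> nice g \<Longrightarrow> nice (\<lambda>p. f p * g p)"
  unfolding nice_def by (auto intro!: continuous_intros)

lemma nice_mult2: "nice f \<Longrightarrow> continuous_on Dom g \<Longrightarrow> nice (\<lambda>p. f p * g p)"
  unfolding nice_def by (auto intro!: continuous_intros)

lemma nice_add: "nice f \<Longrightarrow> nice g \<Longrightarrow> nice (\<lambda>p. f p + g p)"
  unfolding nice_def by (auto intro!: continuous_intros)

lemma nice_diff: "nice f \<Longrightarrow> nice g \<Longrightarrow> nice (\<lambda>p. f p - g p)"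
  unfolding nice_def by (auto intro!: continuous_intros)

lemma nice_C1: "C1 f \<Longrightarrow> (\<And>p. p \<notin> K \<Longrightarrow> f p = 0) \<Longrightarrow> nice f"
  unfolding nice_def using C1_cont by blast

lemma nice_pd: "C1 f \<Longrightarrow> (\<And>p. p \<notin> K \<Longrightarrow> f p = 0) \<Longrightarrow> nice (pd v f)"
  unfolding nice_def using C1_pd_cont pd_zero_off[OF K(1)] by blast

lemma nice_divg: "(\<And>i. C1 (\<lambda>q. V q $ i)) \<Longrightarrow> (\<And>p. p \<notin> K \<Longrightarrow> V p = 0) \<Longrightarrow> nice (divg V)"
  unfolding nice_def using divg_cont divg_zero_off[OF K(1)] by blast

lemma grad_zero_off: "(\<And>p. p \<notin> K \<Longrightarrow> f p = 0) \<Longrightarrow> p \<notin> K \<Longrightarrow> grad f p = 0"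
  unfolding grad_def using pd_zero_off[OF K(1)] by (simp add: vec_eq_iff)

lemma nice_inner_grad: "C2 f \<Longrightarrow> C2 \<eta> \<Longrightarrow> (\<And>p. p \<notin> K \<Longrightarrow> \<eta> p = 0) \<Longrightarrow> nice (\<lambda>p. grad f p \<bullet> grad \<eta> p)"
  unfolding nice_def using C1_cont[OF C1_inner_grad] grad_zero_off by auto

lemma nice_inner_grad': "C2 f \<Longrightarrow> C2 \<eta> \<Longrightarrow> (\<And>p. p \<notin> K \<Longrightarrow> \<eta> p = 0) \<Longrightarrow> nice (\<lambda>p. grad \<eta> p \<bullet> grad f p)"
  unfolding nice_def using C1_cont[OF C1_inner_grad] grad_zero_off by auto


lemma dzero:
  fixes \<rho> \<Psi> \<Psi>' \<Phi> \<eta> :: "'n pt \<Rightarrow> real" and P R B :: real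
  assumes st: "s \<in> {0<..<1}" "t \<in> {0<..<1}"
    and C\<rho>: "C1 \<rho>" and C\<Psi>: "C2 \<Psi>" and C\<Psi>': "C2 \<Psi>'" and C\<Phi>: "C2 \<Phi>" and C\<eta>: "C2 \<eta>"
    and \<eta>z: "\<And>p. p \<notin> K \<Longrightarrow> \<eta> p = 0"
    and eq: "\<And>x. (1/B) * divg (\<lambda>q. \<rho> q *\<^sub>R (P *\<^sub>R grad \<Psi> q - R *\<^sub>R grad \<Psi>' q)) (s,t,x)
               = divg (\<lambda>q. \<rho> q *\<^sub>R grad \<Phi> q) (s,t,x)"
  shows "(P * xint (\<lambda>p. (grad \<Psi> p \<bullet> grad \<eta> p) * \<rho> p) s t - R * xint (\<lambda>p. (grad \<eta> p \<bullet> grad \<Psi>' p) * \<rho> p) s t) / B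
     + xint (\<lambda>p. \<Phi> p * divg (\<lambda>q. \<rho> q *\<^sub>R grad \<eta> q) p) s t = 0"
proof -
  define W where "W = (\<lambda>q. \<rho> q *\<^sub>R (P *\<^sub>R grad \<Psi> q - R *\<^sub>R grad \<Psi>' q))"
  have CW: "C1 (\<lambda>q. W q $ i)" for i
  proof -
    have "C1 (\<lambda>q. \<rho> q * (P * grad \<Psi> q $ i - R * grad \<Psi>' q $ i))"
      by (intro C1_mult C1_diff' C1_cmult C1_grad C\<rho> C\<Psi> C\<Psi>')
    thus ?thesis by (simp add: W_def)
  qed
  have C\<rho>\<Phi>: "C1 (\<lambda>q. (\<rho> q *\<^sub>R grad \<Phi> q) $ i)" for i by (simp add: C1_mult C1_grad C\<rho> C\<Phi>)
  have C\<rho>\<eta>: "C1 (\<lambda>q. (\<rho> q *\<^sub>R grad \<eta> q) $ i)" for i by (simp add: C1_mult C1_grad C\<rho> C\<eta>)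
  have \<rho>\<eta>z: "\<forall>p. p \<notin> K \<longrightarrow> (\<forall>i. (\<rho> p *\<^sub>R grad \<eta> p) $ i = 0)"
    using grad_zero_off[OF \<eta>z] by simp
  have \<eta>z': "\<forall>p. p \<notin> K \<longrightarrow> \<eta> p = 0" using \<eta>z by blast
  have i1: "xint (\<lambda>p. \<eta> p * divg W p) s t + xint (\<lambda>p. grad \<eta> p \<bullet> W p) s t = 0"
    by (rule ibp[OF st C2_C1[OF C\<eta>] CW K box]) (assumption, rule disjI1[OF \<eta>z'])
  have i2: "xint (\<lambda>p. \<eta> p * divg (\<lambda>q. \<rho> q *\<^sub>R grad \<Phi> q) p) s t
      + xint (\<lambda>p. grad \<eta> p \<bullet> (\<rho> p *\<^sub>R grad \<Phi> p)) s t = 0"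
    by (rule ibp[OF st C2_C1[OF C\<eta>] C\<rho>\<Phi> K box]) (assumption, rule disjI1[OF \<eta>z'])
  have i3: "xint (\<lambda>p. \<Phi> p * divg (\<lambda>q. \<rho> q *\<^sub>R grad \<eta> q) p) s t
      + xint (\<lambda>p. grad \<Phi> p \<bullet> (\<rho> p *\<^sub>R grad \<eta> p)) s t = 0"
    by (rule ibp[OF st C2_C1[OF C\<Phi>] C\<rho>\<eta> K box]) (assumption, rule disjI2[OF \<rho>\<eta>z])
  have e1: "xint (\<lambda>p. \<eta> p * divg (\<lambda>q. \<rho> q *\<^sub>R grad \<Phi> q) p) s t = (1/B) * xint (\<lambda>p. \<eta> p * divg W p) s t"
    unfolding xint_cmult[symmetric] by (rule xint_cong) (simp add: eq[symmetric] W_def)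
  have n1: "nice (\<lambda>p. P * ((grad \<Psi> p \<bullet> grad \<eta> p) * \<rho> p))"
    by (intro nice_mult1 nice_mult2 nice_inner_grad C\<Psi> C\<eta> \<eta>z C1_cont[OF C\<rho>] continuous_intros)
  have n2: "nice (\<lambda>p. R * ((grad \<eta> p \<bullet> grad \<Psi>' p) * \<rho> p))"
    by (intro nice_mult1 nice_mult2 nice_inner_grad' C\<Psi>' C\<eta> \<eta>z C1_cont[OF C\<rho>] continuous_intros)
  have e2: "xint (\<lambda>p. grad \<eta> p \<bullet> W p) s t = P * xint (\<lambda>p. (grad \<Psi> p \<bullet> grad \<eta> p) * \<rho> p) s t
      - R * xint (\<lambda>p. (grad \<eta> p \<bullet> grad \<Psi>' p) * \<rho> p) s t"
  proof -
    have "xint (\<lambda>p. grad \<eta> p \<bullet> W p) s t = xint (\<lambda>p. P * ((grad \<Psi> p \<bullet> grad \<eta> p) * \<rho> p)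
       - R * ((grad \<eta> p \<bullet> grad \<Psi>' p) * \<rho> p)) s t"
      by (rule xint_cong) (simp add: W_def inner_diff_right inner_commute algebra_simps)
    also have "\<dots> = xint (\<lambda>p. P * ((grad \<Psi> p \<bullet> grad \<eta> p) * \<rho> p)) s t
       - xint (\<lambda>p. R * ((grad \<eta> p \<bullet> grad \<Psi>' p) * \<rho> p)) s t"
      by (rule xint_diff[OF nice_int[OF n1] nice_int[OF n2]])
    finally show ?thesis by (simp add: xint_cmult)
  qed
  have e3: "xint (\<lambda>p. grad \<eta> p \<bullet> (\<rho> p *\<^sub>R grad \<Phi> p)) s t = xint (\<lambda>p. grad \<Phi> p \<bullet> (\<rho> p *\<^sub>R grad \<eta> p)) s t"
    by (rule xint_cong) (simp add: inner_commute)
  define X where "X = xint (\<lambda>p. \<eta> p * divg W p) s t"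
  have C: "xint (\<lambda>p. \<Phi> p * divg (\<lambda>q. \<rho> q *\<^sub>R grad \<eta> q) p) s t = (1/B) * X"
    using i2 i3 e1 e3 unfolding X_def by linarith
  have Y: "xint (\<lambda>p. grad \<eta> p \<bullet> W p) s t = - X" using i1 unfolding X_def by linarith
  show ?thesis unfolding e2[symmetric] C Y by (simp add: divide_simps)
qed


lemma aux_alg:
  fixes B A Bq C Gtt Gss Gst e :: real
  shows "(1/B) * ((1/2) * A * Gtt + (1/2) * Bq * Gss - C * Gst) * e
     = Gtt/(2*B) * (A * e) + Gss/(2*B) * (Bq * e) - Gst/B * (C * e)"
  by (cases "B = 0") (simp_all add: field_simps)

lemma aux_alg2:
  fixes B X Y Z Gtt Gss Gst :: real
  shows "(X * Gtt + Gss * Y - 2 * Gst * Z) / (2 * B) = Gtt/(2*B) * X + Gss/(2*B) * Y - Gst/B * Z"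
  by (cases "B = 0") (simp_all add: field_simps)

lemma nxint_add: "nice f \<Longrightarrow> nice g \<Longrightarrow> xint (\<lambda>p. f p + g p) s t = xint f s t + xint g s t"
  by (intro xint_add nice_int)
lemma nxint_diff: "nice f \<Longrightarrow> nice g \<Longrightarrow> xint (\<lambda>p. f p - g p) s t = xint f s t - xint g s t"
  by (intro xint_diff nice_int)

lemma drho:
  fixes \<Psi>s \<Psi>t \<Phi>s \<Phi>t \<eta> :: "'n pt \<Rightarrow> real" and B Gss Gtt Gst :: real
  assumes st: "s \<in> {0<..<1}" "t \<in> {0<..<1}"
    and C\<Psi>s: "C2 \<Psi>s" and C\<Psi>t: "C2 \<Psi>t" and C\<Phi>s: "C2 \<Phi>s" and C\<Phi>t: "C2 \<Phi>t" and C\<eta>: "C2 \<eta>"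
    and \<eta>z: "\<And>p. p \<notin> K \<Longrightarrow> \<eta> p = 0"
    and eqr: "\<And>x. dS \<Phi>s (s,t,x) + dT \<Phi>t (s,t,x) + grad \<Phi>s (s,t,x) \<bullet> grad \<Psi>s (s,t,x)
        + grad \<Phi>t (s,t,x) \<bullet> grad \<Psi>t (s,t,x)
        - (1/B) * ((1/2) * (grad \<Psi>s (s,t,x) \<bullet> grad \<Psi>s (s,t,x)) * Gtt
           + (1/2) * (grad \<Psi>t (s,t,x) \<bullet> grad \<Psi>t (s,t,x)) * Gss
           - (grad \<Psi>t (s,t,x) \<bullet> grad \<Psi>s (s,t,x)) * Gst) = 0"
  shows "(xint (\<lambda>p. (grad \<Psi>s p \<bullet> grad \<Psi>s p) * \<eta> p) s t * Gtt
          + Gss * xint (\<lambda>p. (grad \<Psi>t p \<bullet> grad \<Psi>t p) * \<eta> p) s t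
          - 2 * Gst * xint (\<lambda>p. (grad \<Psi>s p \<bullet> grad \<Psi>t p) * \<eta> p) s t) / (2 * B)
       + xint (\<lambda>p. \<Phi>s p * (dS \<eta> p + divg (\<lambda>q. \<eta> q *\<^sub>R grad \<Psi>s q) p)
                 + \<Phi>t p * (dT \<eta> p + divg (\<lambda>q. \<eta> q *\<^sub>R grad \<Psi>t q) p)) s t
       = xint (\<lambda>p. dS (\<lambda>q. \<Phi>s q * \<eta> q) p + dT (\<lambda>q. \<Phi>t q * \<eta> q) p) s t"
proof -
  have \<eta>z': "\<forall>p. p \<notin> K \<longrightarrow> \<eta> p = 0" using \<eta>z by blast
  have Cd: "continuous_on Dom (pd v f)" if "C2 f" for v f using C1_pd_cont[OF C2_C1[OF that]] .
  have Ci: "continuous_on Dom (\<lambda>p. grad f p \<bullet> grad g p)" if "C2 f" "C2 g" for f g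
    using C1_cont[OF C1_inner_grad[OF that]] .
  have ne: "nice \<eta>" by (rule nice_C1[OF C2_C1[OF C\<eta>] \<eta>z])
  have npe: "nice (pd v \<eta>)" for v by (rule nice_pd[OF C2_C1[OF C\<eta>] \<eta>z])
  have ndiv: "nice (divg (\<lambda>q. \<eta> q *\<^sub>R grad f q))" if "C2 f" for f
    by (rule nice_divg) (auto simp: C1_mult C2_C1[OF C\<eta>] C1_grad[OF that] \<eta>z)
  define T where "T f g p = (grad f p \<bullet> grad g p) * \<eta> p" for f g p
  have nT: "nice (T f g)" if "C2 f" "C2 g" for f g
    unfolding T_def[abs_def] by (rule nice_mult1[OF Ci[OF that] ne])
  define c where "c p = \<Phi>s p * (dS \<eta> p + divg (\<lambda>q. \<eta> q *\<^sub>R grad \<Psi>s q) p)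
                 + \<Phi>t p * (dT \<eta> p + divg (\<lambda>q. \<eta> q *\<^sub>R grad \<Psi>t q) p)" for p
  define f2 where "f2 p = (dS \<Phi>s p + dT \<Phi>t p + grad \<Phi>s p \<bullet> grad \<Psi>s p + grad \<Phi>t p \<bullet> grad \<Psi>t p) * \<eta> p" for p
  define A1 where "A1 p = \<Phi>s p * divg (\<lambda>q. \<eta> q *\<^sub>R grad \<Psi>s q) p" for p
  define A2 where "A2 p = \<Phi>t p * divg (\<lambda>q. \<eta> q *\<^sub>R grad \<Psi>t q) p" for p
  define h where "h p = dS (\<lambda>q. \<Phi>s q * \<eta> q) p + dT (\<lambda>q. \<Phi>t q * \<eta> q) p" for p
  have nc: "nice c" unfolding c_def[abs_def] dS_def dT_def
    by (intro nice_add nice_mult1 npe ndiv C\<Psi>s C\<Psi>t C1_cont[OF C2_C1[OF C\<Phi>s]] C1_cont[OF C2_C1[OF C\<Phi>t]])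
  have nf2: "nice f2" unfolding f2_def[abs_def] dS_def dT_def
    by (intro nice_mult1 ne continuous_intros Cd Ci C\<Phi>s C\<Phi>t C\<Psi>s C\<Psi>t)
  have nA1: "nice A1" unfolding A1_def[abs_def]
    by (intro nice_mult1 ndiv C\<Psi>s C1_cont[OF C2_C1[OF C\<Phi>s]])
  have nA2: "nice A2" unfolding A2_def[abs_def]
    by (intro nice_mult1 ndiv C\<Psi>t C1_cont[OF C2_C1[OF C\<Phi>t]])
  have CW: "C1 (\<lambda>q. (\<eta> q *\<^sub>R grad f q) $ i)" if "C2 f" for f i
    by (simp add: C1_mult C2_C1[OF C\<eta>] C1_grad[OF that])
  have ibp_s: "xint A1 s t + xint (T \<Phi>s \<Psi>s) s t = 0"
  proof -
    have "xint A1 s t + xint (\<lambda>p. grad \<Phi>s p \<bullet> (\<eta> p *\<^sub>R grad \<Psi>s p)) s t = 0"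
      unfolding A1_def by (rule ibp[OF st C2_C1[OF C\<Phi>s] CW[OF C\<Psi>s] K box]) (assumption, rule disjI2, use \<eta>z' in auto)
    moreover have "xint (\<lambda>p. grad \<Phi>s p \<bullet> (\<eta> p *\<^sub>R grad \<Psi>s p)) s t = xint (T \<Phi>s \<Psi>s) s t"
      by (rule xint_cong) (simp add: T_def)
    ultimately show ?thesis by simp
  qed
  have ibp_t: "xint A2 s t + xint (T \<Phi>t \<Psi>t) s t = 0"
  proof -
    have "xint A2 s t + xint (\<lambda>p. grad \<Phi>t p \<bullet> (\<eta> p *\<^sub>R grad \<Psi>t p)) s t = 0"
      unfolding A2_def by (rule ibp[OF st C2_C1[OF C\<Phi>t] CW[OF C\<Psi>t] K box]) (assumption, rule disjI2, use \<eta>z' in auto)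
    moreover have "xint (\<lambda>p. grad \<Phi>t p \<bullet> (\<eta> p *\<^sub>R grad \<Psi>t p)) s t = xint (T \<Phi>t \<Psi>t) s t"
      by (rule xint_cong) (simp add: T_def)
    ultimately show ?thesis by simp
  qed
  have L1: "(xint (T \<Psi>s \<Psi>s) s t * Gtt + Gss * xint (T \<Psi>t \<Psi>t) s t - 2 * Gst * xint (T \<Psi>s \<Psi>t) s t) / (2 * B)
      = xint f2 s t"
  proof -
    have "xint f2 s t = xint (\<lambda>p. Gtt/(2*B) * T \<Psi>s \<Psi>s p + Gss/(2*B) * T \<Psi>t \<Psi>t p - Gst/B * T \<Psi>s \<Psi>t p) s t"
    proof (rule xint_cong)
      fix x
      have "f2 (s,t,x) = (1/B) * ((1/2) * (grad \<Psi>s (s,t,x) \<bullet> grad \<Psi>s (s,t,x)) * Gtt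
           + (1/2) * (grad \<Psi>t (s,t,x) \<bullet> grad \<Psi>t (s,t,x)) * Gss
           - (grad \<Psi>t (s,t,x) \<bullet> grad \<Psi>s (s,t,x)) * Gst) * \<eta> (s,t,x)"
      proof -
        have E: "dS \<Phi>s (s,t,x) + dT \<Phi>t (s,t,x) + grad \<Phi>s (s,t,x) \<bullet> grad \<Psi>s (s,t,x)
          + grad \<Phi>t (s,t,x) \<bullet> grad \<Psi>t (s,t,x) = (1/B) * ((1/2) * (grad \<Psi>s (s,t,x) \<bullet> grad \<Psi>s (s,t,x)) * Gtt
           + (1/2) * (grad \<Psi>t (s,t,x) \<bullet> grad \<Psi>t (s,t,x)) * Gss
           - (grad \<Psi>t (s,t,x) \<bullet> grad \<Psi>s (s,t,x)) * Gst)" using eqr[of x] by linarith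
        show ?thesis unfolding f2_def by (simp only: E)
      qed
      thus "f2 (s,t,x) = Gtt/(2*B) * T \<Psi>s \<Psi>s (s,t,x) + Gss/(2*B) * T \<Psi>t \<Psi>t (s,t,x) - Gst/B * T \<Psi>s \<Psi>t (s,t,x)"
        unfolding T_def inner_commute[of "grad \<Psi>t (s,t,x)" "grad \<Psi>s (s,t,x)"] by (rule trans[OF _ aux_alg])
    qed
    also have "\<dots> = Gtt/(2*B) * xint (T \<Psi>s \<Psi>s) s t + Gss/(2*B) * xint (T \<Psi>t \<Psi>t) s t - Gst/B * xint (T \<Psi>s \<Psi>t) s t"
      by (subst nxint_diff, (intro nice_add nice_mult1 continuous_intros nT C\<Psi>s C\<Psi>t)+,
          subst nxint_add, (intro nice_mult1 continuous_intros nT C\<Psi>s C\<Psi>t)+) (simp only: xint_cmult)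
    finally show ?thesis unfolding aux_alg2 by (rule sym)
  qed
  have hpw: "h p = c p + f2 p - A1 p - T \<Phi>s \<Psi>s p - A2 p - T \<Phi>t \<Psi>t p" if "p \<in> Dom" for p
    using that unfolding h_def c_def f2_def A1_def A2_def T_def dS_def dT_def
    by (simp add: pd_mult C1_diff C2_C1 C\<Phi>s C\<Phi>t C\<eta> algebra_simps)
  have "xint h s t = xint (\<lambda>p. c p + f2 p - A1 p - T \<Phi>s \<Psi>s p - A2 p - T \<Phi>t \<Psi>t p) s t"
    by (rule xint_cong) (use st in \<open>simp add: hpw Dom_iff\<close>)
  also have "\<dots> = xint c s t + xint f2 s t - xint A1 s t - xint (T \<Phi>s \<Psi>s) s t - xint A2 s t - xint (T \<Phi>t \<Psi>t) s t"
    by (simp add: nxint_add nxint_diff nice_add nice_diff nc nf2 nA1 nA2 nT C\<Phi>s C\<Phi>t C\<Psi>s C\<Psi>t)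
  finally have "xint h s t = xint c s t + xint f2 s t" using ibp_s ibp_t by linarith
  thus ?thesis using L1 unfolding T_def c_def h_def by simp
qed


lemma diff_all:
  assumes "C1 H" "\<And>p. p \<notin> K \<Longrightarrow> H p = 0"
  shows "H differentiable (at p)"
proof (cases "p \<in> Dom")
  case True thus ?thesis using C1_diff[OF assms(1)] by blast
next
  case False
  hence pK: "p \<notin> K" using K by auto
  have "((\<lambda>_. 0::real) has_derivative (\<lambda>_. 0)) (at p)" by simp
  hence "(H has_derivative (\<lambda>_. 0)) (at p)"
    by (rule has_derivative_transform_within_open[where s="- K"])
       (use pK assms(2) open_Compl[OF compact_imp_closed[OF K(1)]] in auto)
  thus ?thesis unfolding differentiable_def by blast
qed

lemma ftc_slice:
  assumes CH: "C1 H" and Hz: "\<And>p. p \<notin> K \<Longrightarrow> H p = 0"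
    and P0: "\<And>x. P 0 x \<notin> Dom" and P1: "\<And>x. P 1 x \<notin> Dom"
    and Pv: "\<And>u x. P u x = P 0 x + u *\<^sub>R v"
    and Pc: "continuous_on UNIV (\<lambda>z. P (fst z) (snd z))"
  shows "integral {0..1} (\<lambda>u. integral (cbox a b) (\<lambda>x. pd v H (P u x))) = 0"
proof (rule ftc_gen[where \<phi>="\<lambda>u x. H (P u x)"])
  show "((\<lambda>u. H (P u x)) has_real_derivative pd v H (P u x)) (at u)" for u x
  proof -
    have L: "(\<lambda>u. H (P u x)) = (\<lambda>h. H (P 0 x + h *\<^sub>R v))" by (rule ext) (subst Pv, rule refl)
    have R: "pd v H (P u x) = pd v H (P 0 x + u *\<^sub>R v)" by (subst Pv, rule refl)
    show ?thesis unfolding L R by (rule pd_deriv_at[of H "P 0 x" u v, OF diff_all[OF CH Hz]])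
  qed
  have nH: "nice H" by (rule nice_C1[OF CH Hz])
  have npH: "nice (pd v H)" by (rule nice_pd[OF CH Hz])
  show "continuous_on UNIV (\<lambda>z. H (P (fst z) (snd z)))"
    by (rule continuous_on_compose2[OF nice_cont[OF nH] Pc]) auto
  show "continuous_on UNIV (\<lambda>z. pd v H (P (fst z) (snd z)))"
    by (rule continuous_on_compose2[OF nice_cont[OF npH] Pc]) auto
  show "H (P 0 x) = 0" "H (P 1 x) = 0" for x using Hz P0 P1 K(2) by blast+
qed

lemma dd_zero:
  assumes C\<Phi>s: "C2 \<Phi>s" and C\<Phi>t: "C2 \<Phi>t" and C\<eta>: "C2 \<eta>" and \<eta>z: "\<And>p. p \<notin> K \<Longrightarrow> \<eta> p = 0"
  shows "integral (cbox (0,0) (1,1))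
     (\<lambda>z. xint (\<lambda>p. dS (\<lambda>q. \<Phi>s q * \<eta> q) p + dT (\<lambda>q. \<Phi>t q * \<eta> q) p) (fst z) (snd z)) = 0"
proof -
  define H1 where "H1 = (\<lambda>q. \<Phi>s q * \<eta> q)"
  define H2 where "H2 = (\<lambda>q. \<Phi>t q * \<eta> q)"
  have C1: "C1 H1" "C1 H2" unfolding H1_def H2_def by (intro C1_mult C2_C1 C\<Phi>s C\<Phi>t C\<eta>)+
  have Hz: "H1 p = 0" "H2 p = 0" if "p \<notin> K" for p using \<eta>z[OF that] by (simp_all add: H1_def H2_def)
  have n1: "nice (dS H1)" unfolding dS_def[abs_def] by (rule nice_pd[OF C1(1)]) (use Hz in auto)
  have n2: "nice (dT H2)" unfolding dT_def[abs_def] by (rule nice_pd[OF C1(2)]) (use Hz in auto)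
  have c1: "continuous_on UNIV (\<lambda>z. xint (dS H1) (fst z) (snd z))" by (rule nice_xcont[OF n1])
  have c2: "continuous_on UNIV (\<lambda>z. xint (dT H2) (fst z) (snd z))" by (rule nice_xcont[OF n2])
  have split: "(\<lambda>z. xint (\<lambda>p. dS H1 p + dT H2 p) (fst z) (snd z))
      = (\<lambda>z. xint (dS H1) (fst z) (snd z) + xint (dT H2) (fst z) (snd z))"
    by (rule ext) (rule nxint_add[OF n1 n2])
  have I1: "integral (cbox (0,0) (1,1)) (\<lambda>z. xint (dS H1) (fst z) (snd z)) = 0"
  proof -
    have "integral (cbox (0::real,0::real) (1,1)) (\<lambda>z. xint (dS H1) (fst z) (snd z))
       = integral (cbox 0 1) (\<lambda>s. integral (cbox 0 1) (\<lambda>t. xint (dS H1) s t))"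
      by (subst integral_prod_continuous) (auto intro: continuous_on_subset[OF c1])
    also have "\<dots> = integral (cbox 0 1) (\<lambda>t. integral (cbox 0 1) (\<lambda>s. xint (dS H1) s t))"
      by (rule integral_swap_continuous) (auto simp: case_prod_unfold intro: continuous_on_subset[OF c1])
    also have "\<dots> = integral (cbox 0 1) (\<lambda>t::real. 0)"
    proof (rule integral_cong)
      fix t :: real
      have "integral (cbox 0 1) (\<lambda>s. xint (dS H1) s t)
          = integral {0..1} (\<lambda>u. integral (cbox a b) (\<lambda>x. pd (1,0,0) H1 (u,t,x)))"
        by (simp add: nice_cbox[OF n1] dS_def cbox_interval)
      also have "\<dots> = 0"
        by (rule ftc_slice[OF C1(1), where P="\<lambda>u x. (u,t,x)"]) (auto simp: Hz Dom_iff intro!: continuous_intros)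
      finally show "integral (cbox 0 1) (\<lambda>s. xint (dS H1) s t) = 0" .
    qed
    finally show ?thesis by simp
  qed
  have I2: "integral (cbox (0,0) (1,1)) (\<lambda>z. xint (dT H2) (fst z) (snd z)) = 0"
  proof -
    have "integral (cbox (0::real,0::real) (1,1)) (\<lambda>z. xint (dT H2) (fst z) (snd z))
       = integral (cbox 0 1) (\<lambda>s. integral (cbox 0 1) (\<lambda>t. xint (dT H2) s t))"
      by (subst integral_prod_continuous) (auto intro: continuous_on_subset[OF c2])
    also have "\<dots> = integral (cbox 0 1) (\<lambda>s::real. 0)"
    proof (rule integral_cong)
      fix s :: real
      have "integral (cbox 0 1) (\<lambda>t. xint (dT H2) s t)
          = integral {0..1} (\<lambda>u. integral (cbox a b) (\<lambda>x. pd (0,1,0) H2 (s,u,x)))"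
        by (simp add: nice_cbox[OF n2] dT_def cbox_interval)
      also have "\<dots> = 0"
        by (rule ftc_slice[OF C1(2), where P="\<lambda>u x. (s,u,x)"]) (auto simp: Hz Dom_iff intro!: continuous_intros)
      finally show "integral (cbox 0 1) (\<lambda>t. xint (dT H2) s t) = 0" .
    qed
    finally show ?thesis by simp
  qed
  have "integral (cbox (0::real,0::real) (1,1)) (\<lambda>z. xint (dS H1) (fst z) (snd z) + xint (dT H2) (fst z) (snd z))
     = integral (cbox (0,0) (1,1)) (\<lambda>z. xint (dS H1) (fst z) (snd z))
       + integral (cbox (0,0) (1,1)) (\<lambda>z. xint (dT H2) (fst z) (snd z))"
    by (rule integral_add) (auto intro!: integrable_continuous intro: continuous_on_subset[OF c1] continuous_on_subset[OF c2])
  thus ?thesis unfolding H1_def[symmetric] H2_def[symmetric] split I1 I2 by simp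
qed

end


lemma G_sym: "G f g \<rho> s t = G g f \<rho> s t"
  unfolding G_def by (simp add: inner_commute)

lemma B_sq:
  assumes "Bcost \<Psi>s \<Psi>t \<rho> s t > 0"
  shows "(Bcost \<Psi>s \<Psi>t \<rho> s t)^2 = G \<Psi>s \<Psi>s \<rho> s t * G \<Psi>t \<Psi>t \<rho> s t - (G \<Psi>s \<Psi>t \<rho> s t)^2"
proof -
  have "G \<Psi>s \<Psi>s \<rho> s t * G \<Psi>t \<Psi>t \<rho> s t - (G \<Psi>s \<Psi>t \<rho> s t)^2 > 0"
    using assms unfolding Bcost_def by simp
  thus ?thesis unfolding Bcost_def by simp
qed

lemma var_phi:
  fixes \<rho> \<Psi>s \<Psi>t \<Phi>s \<Phi>t \<eta> :: "'n::finite pt \<Rightarrow> real"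
  assumes B_pos: "\<And>s t. s \<in> {0<..<1} \<Longrightarrow> t \<in> {0<..<1} \<Longrightarrow> Bcost \<Psi>s \<Psi>t \<rho> s t > 0"
    and B_int: "set_integrable lborel ({0..1} \<times> {0..1}) (\<lambda>(s, t). Bcost \<Psi>s \<Psi>t \<rho> s t)"
    and Bc: "continuous_on ({0<..<1} \<times> {0<..<1}) (\<lambda>z. Bcost \<Psi>s \<Psi>t \<rho> (fst z) (snd z))"
    and Fe: "\<And>e s t. s \<in> {0<..<1} \<Longrightarrow> t \<in> {0<..<1} \<Longrightarrow> F e s t = Bcost \<Psi>s \<Psi>t \<rho> s t"
  shows "((\<lambda>e. set_lebesgue_integral lborel {0..1} (\<lambda>s. set_lebesgue_integral lborel {0..1} (\<lambda>t. F e s t)))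
     has_real_derivative 0) (at 0)"
proof -
  have "((\<lambda>e. set_lebesgue_integral lborel {0..1} (\<lambda>s. set_lebesgue_integral lborel {0..1} (\<lambda>t. F e s t)))
     has_real_derivative integral (cbox (0,0) (1,1)) (\<lambda>z. if z \<in> {0<..<1} \<times> {0<..<1}
        then (\<lambda>s t. 0) (fst z) (snd z) / (2 * Bcost \<Psi>s \<Psi>t \<rho> (fst z) (snd z)) + (\<lambda>s t. 0) (fst z) (snd z) else 0)) (at 0)"
  proof (rule lag_quad[where Bz="\<lambda>s t. Bcost \<Psi>s \<Psi>t \<rho> s t" and KK="{}"])
    show "set_integrable lborel ({0..1} \<times> {0..1}) (\<lambda>(s, t). Bcost \<Psi>s \<Psi>t \<rho> s t)" by (rule B_int)
    show "continuous_on ({0<..<1} \<times> {0<..<1}) (\<lambda>z. Bcost \<Psi>s \<Psi>t \<rho> (fst z) (snd z))" by (rule Bc)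
    fix e s t assume "(s,t) \<in> {0<..<1::real} \<times> {0<..<1::real}"
    hence st: "s \<in> {0<..<1}" "t \<in> {0<..<1}" by auto
    show "F e s t = sqrt ((Bcost \<Psi>s \<Psi>t \<rho> s t)^2 + e * 0 + e^2 * 0) + e * 0"
      using B_pos[OF st] Fe[OF st] by simp
  qed (auto intro: B_pos)
  moreover have "(\<lambda>z. if z \<in> {0<..<1::real} \<times> {0<..<1::real}
        then (\<lambda>s t. 0::real) (fst z) (snd z) / (2 * Bcost \<Psi>s \<Psi>t \<rho> (fst z) (snd z)) + (\<lambda>s t. 0) (fst z) (snd z) else 0) = (\<lambda>z. 0)"
    by auto
  ultimately show ?thesis by simp
qed


context kbox begin

definition K2 where "K2 = (\<lambda>p. (fst p, fst (snd p))) ` K"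

lemma K2: "compact K2" "K2 \<subseteq> {0<..<1} \<times> {0<..<1}"
proof -
  show "compact K2" unfolding K2_def
    by (rule compact_continuous_image[OF _ K(1)]) (auto intro!: continuous_intros)
  show "K2 \<subseteq> {0<..<1} \<times> {0<..<1}" unfolding K2_def using K(2) by (auto simp: Dom_def)
qed

lemma K2_out: "(s,t) \<notin> K2 \<Longrightarrow> (s,t,x) \<notin> K"
  unfolding K2_def by force

lemma Sq_out: "(s,t) \<notin> {0<..<1} \<times> {0<..<1} \<Longrightarrow> (s,t,x) \<notin> K"
  using K(2) by (auto simp: Dom_def)

lemma var_rho:
  fixes \<rho> \<Psi>s \<Psi>t \<Phi>s \<Phi>t \<eta> :: "'n pt \<Rightarrow> real"
  assumes C\<rho>: "C1 \<rho>" and C\<Psi>s: "C2 \<Psi>s" and C\<Psi>t: "C2 \<Psi>t" and C\<Phi>s: "C2 \<Phi>s" and C\<Phi>t: "C2 \<Phi>t"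
    and C\<eta>: "C2 \<eta>" and \<eta>z: "\<And>p. p \<notin> K \<Longrightarrow> \<eta> p = 0"
    and gram_int: "\<And>s t. s \<in> {0<..<1} \<Longrightarrow> t \<in> {0<..<1} \<Longrightarrow>
        integrable lborel (\<lambda>x. (grad \<Psi>s (s, t, x) \<bullet> grad \<Psi>s (s, t, x)) * \<rho> (s, t, x))
      \<and> integrable lborel (\<lambda>x. (grad \<Psi>t (s, t, x) \<bullet> grad \<Psi>t (s, t, x)) * \<rho> (s, t, x))
      \<and> integrable lborel (\<lambda>x. (grad \<Psi>s (s, t, x) \<bullet> grad \<Psi>t (s, t, x)) * \<rho> (s, t, x))"
    and gc1: "continuous_on ({0<..<1} \<times> {0<..<1}) (\<lambda>z. G \<Psi>s \<Psi>s \<rho> (fst z) (snd z))"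
    and gc2: "continuous_on ({0<..<1} \<times> {0<..<1}) (\<lambda>z. G \<Psi>t \<Psi>t \<rho> (fst z) (snd z))"
    and gc3: "continuous_on ({0<..<1} \<times> {0<..<1}) (\<lambda>z. G \<Psi>s \<Psi>t \<rho> (fst z) (snd z))"
    and B_pos: "\<And>s t. s \<in> {0<..<1} \<Longrightarrow> t \<in> {0<..<1} \<Longrightarrow> Bcost \<Psi>s \<Psi>t \<rho> s t > 0"
    and B_int: "set_integrable lborel ({0..1} \<times> {0..1}) (\<lambda>(s, t). Bcost \<Psi>s \<Psi>t \<rho> s t)"
    and eq_rho: "\<And>p. p \<in> Dom \<Longrightarrow>
        (let s = fst p; t = fst (snd p) in
          dS \<Phi>s p + dT \<Phi>t p + grad \<Phi>s p \<bullet> grad \<Psi>s p + grad \<Phi>t p \<bullet> grad \<Psi>t p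
          - (1 / Bcost \<Psi>s \<Psi>t \<rho> s t) *
              ((1/2) * (grad \<Psi>s p \<bullet> grad \<Psi>s p) * G \<Psi>t \<Psi>t \<rho> s t
             + (1/2) * (grad \<Psi>t p \<bullet> grad \<Psi>t p) * G \<Psi>s \<Psi>s \<rho> s t
             - (grad \<Psi>t p \<bullet> grad \<Psi>s p) * G \<Psi>t \<Psi>s \<rho> s t) = 0)"
    and cont_s: "\<And>p. p \<in> Dom \<Longrightarrow> dS \<rho> p + divg (\<lambda>q. \<rho> q *\<^sub>R grad \<Psi>s q) p = 0"
    and cont_t: "\<And>p. p \<in> Dom \<Longrightarrow> dT \<rho> p + divg (\<lambda>q. \<rho> q *\<^sub>R grad \<Psi>t q) p = 0"
  shows "((\<lambda>e. Lag (\<lambda>p. \<rho> p + e * \<eta> p) \<Psi>s \<Psi>t \<Phi>s \<Phi>t) has_real_derivative 0) (at 0)"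
proof -
  define Sq where "Sq = {0<..<1::real} \<times> {0<..<1::real}"
  define T where "T f g p = (grad f p \<bullet> grad g p) * \<eta> p" for f g p
  define c where "c p = \<Phi>s p * (dS \<eta> p + divg (\<lambda>q. \<eta> q *\<^sub>R grad \<Psi>s q) p)
                 + \<Phi>t p * (dT \<eta> p + divg (\<lambda>q. \<eta> q *\<^sub>R grad \<Psi>t q) p)" for p
  define Gss where "Gss s t = G \<Psi>s \<Psi>s \<rho> s t" for s t
  define Gtt where "Gtt s t = G \<Psi>t \<Psi>t \<rho> s t" for s t
  define Gst where "Gst s t = G \<Psi>s \<Psi>t \<rho> s t" for s t
  define gss where "gss s t = xint (T \<Psi>s \<Psi>s) s t" for s t
  define gtt where "gtt s t = xint (T \<Psi>t \<Psi>t) s t" for s t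
  define gst where "gst s t = xint (T \<Psi>s \<Psi>t) s t" for s t
  define A where "A s t = gss s t * Gtt s t + Gss s t * gtt s t - 2 * Gst s t * gst s t" for s t
  define Bb where "Bb s t = gss s t * gtt s t - (gst s t)^2" for s t
  define CC where "CC s t = xint c s t" for s t
  define B0 where "B0 s t = Bcost \<Psi>s \<Psi>t \<rho> s t" for s t
  define F where "F e s t = Bcost \<Psi>s \<Psi>t (\<lambda>p. \<rho> p + e * \<eta> p) s t
      + xint (\<lambda>p. \<Phi>s p * (dS (\<lambda>p. \<rho> p + e * \<eta> p) p + divg (\<lambda>q. (\<rho> q + e * \<eta> q) *\<^sub>R grad \<Psi>s q) p)
                + \<Phi>t p * (dT (\<lambda>p. \<rho> p + e * \<eta> p) p + divg (\<lambda>q. (\<rho> q + e * \<eta> q) *\<^sub>R grad \<Psi>t q) p)) s t"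
    for e s t
  have LagF: "(\<lambda>e. Lag (\<lambda>p. \<rho> p + e * \<eta> p) \<Psi>s \<Psi>t \<Phi>s \<Phi>t)
      = (\<lambda>e. set_lebesgue_integral lborel {0..1} (\<lambda>s. set_lebesgue_integral lborel {0..1} (\<lambda>t. F e s t)))"
    by (simp add: Lag_def F_def)
  have st_of: "s \<in> {0<..<1} \<and> t \<in> {0<..<1}" if "(s,t) \<in> Sq" for s t using that by (simp add: Sq_def)
  have pDom: "(s,t,x) \<in> Dom" if "(s,t) \<in> Sq" for s t x using that by (simp add: Sq_def Dom_iff)
  have ne: "nice \<eta>" by (rule nice_C1[OF C2_C1[OF C\<eta>] \<eta>z])
  have npe: "nice (pd v \<eta>)" for v by (rule nice_pd[OF C2_C1[OF C\<eta>] \<eta>z])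
  have ndiv: "nice (divg (\<lambda>q. \<eta> q *\<^sub>R grad f q))" if "C2 f" for f
    by (rule nice_divg) (auto simp: C1_mult C2_C1[OF C\<eta>] C1_grad[OF that] \<eta>z)
  have nT: "nice (T f g)" if "C2 f" "C2 g" for f g
    unfolding T_def[abs_def] by (rule nice_mult1[OF C1_cont[OF C1_inner_grad[OF that]] ne])
  have nc: "nice c" unfolding c_def[abs_def] dS_def dT_def
    by (intro nice_add nice_mult1 npe ndiv C\<Psi>s C\<Psi>t C1_cont[OF C2_C1[OF C\<Phi>s]] C1_cont[OF C2_C1[OF C\<Phi>t]])
  have cS: "continuous_on Sq (\<lambda>z. xint h (fst z) (snd z))" if "nice h" for h
    using nice_xcont[OF that] by (rule continuous_on_subset) simp
  have cA: "continuous_on Sq (\<lambda>z. A (fst z) (snd z))"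
    unfolding A_def gss_def gtt_def gst_def Gss_def Gtt_def Gst_def
    by (intro continuous_intros cS nT C\<Psi>s C\<Psi>t gc1[folded Sq_def] gc2[folded Sq_def] gc3[folded Sq_def])
  have cBb: "continuous_on Sq (\<lambda>z. Bb (fst z) (snd z))"
    unfolding Bb_def gss_def gtt_def gst_def
    by (intro continuous_intros cS nT C\<Psi>s C\<Psi>t)
  have cCC: "continuous_on Sq (\<lambda>z. CC (fst z) (snd z))"
    unfolding CC_def by (rule cS[OF nc])
  have cB0: "continuous_on Sq (\<lambda>z. B0 (fst z) (snd z))"
    unfolding B0_def Bcost_def
    by (intro continuous_intros gc1[folded Sq_def] gc2[folded Sq_def] gc3[folded Sq_def])
  have zer: "A s t = 0 \<and> Bb s t = 0 \<and> CC s t = 0" if "(s,t) \<in> Sq" "(s,t) \<notin> K2" for s t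
  proof -
    have "gss s t = 0" "gtt s t = 0" "gst s t = 0" "CC s t = 0"
      unfolding gss_def gtt_def gst_def CC_def
      by (intro nice_out nT nc C\<Psi>s C\<Psi>t K2_out that(2))+
    thus ?thesis by (simp add: A_def Bb_def)
  qed
  have Fdec: "F e s t = sqrt ((B0 s t)^2 + e * A s t + e^2 * Bb s t) + e * CC s t" if sq: "(s,t) \<in> Sq" for e s t
  proof -
    have st: "s \<in> {0<..<1}" "t \<in> {0<..<1}" using st_of[OF sq] by auto
    have Gexp: "G f g (\<lambda>p. \<rho> p + e * \<eta> p) s t = G f g \<rho> s t + e * xint (T f g) s t"
      if int: "integrable lborel (\<lambda>x. (grad f (s,t,x) \<bullet> grad g (s,t,x)) * \<rho> (s,t,x))" and "C2 f" "C2 g" for f g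
    proof -
      have "G f g (\<lambda>p. \<rho> p + e * \<eta> p) s t = xint (\<lambda>p. (grad f p \<bullet> grad g p) * \<rho> p + e * T f g p) s t"
        unfolding G_def by (rule xint_cong) (simp add: T_def algebra_simps)
      also have "\<dots> = G f g \<rho> s t + xint (\<lambda>p. e * T f g p) s t"
        unfolding G_def by (rule xint_add[OF int]) (rule integrable_mult_right[OF nice_int[OF nT[OF that(2,3)]]])
      finally show ?thesis by (simp add: xint_cmult)
    qed
    have ss: "G \<Psi>s \<Psi>s (\<lambda>p. \<rho> p + e * \<eta> p) s t = Gss s t + e * gss s t"
      unfolding Gss_def gss_def using gram_int[OF st] by (intro Gexp C\<Psi>s) auto
    have tt: "G \<Psi>t \<Psi>t (\<lambda>p. \<rho> p + e * \<eta> p) s t = Gtt s t + e * gtt s t"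
      unfolding Gtt_def gtt_def using gram_int[OF st] by (intro Gexp C\<Psi>t) auto
    have sst: "G \<Psi>s \<Psi>t (\<lambda>p. \<rho> p + e * \<eta> p) s t = Gst s t + e * gst s t"
      unfolding Gst_def gst_def using gram_int[OF st] by (intro Gexp C\<Psi>s C\<Psi>t) auto
    have B2: "(B0 s t)^2 = Gss s t * Gtt s t - (Gst s t)^2"
      unfolding B0_def Gss_def Gtt_def Gst_def by (rule B_sq[OF B_pos[OF st]])
    have Bc: "Bcost \<Psi>s \<Psi>t (\<lambda>p. \<rho> p + e * \<eta> p) s t = sqrt ((B0 s t)^2 + e * A s t + e^2 * Bb s t)"
      unfolding Bcost_def ss tt sst B2 A_def Bb_def by (simp add: algebra_simps power2_eq_square)
    have pw: "\<Phi>s p * (dS (\<lambda>p. \<rho> p + e * \<eta> p) p + divg (\<lambda>q. (\<rho> q + e * \<eta> q) *\<^sub>R grad \<Psi>s q) p)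
                + \<Phi>t p * (dT (\<lambda>p. \<rho> p + e * \<eta> p) p + divg (\<lambda>q. (\<rho> q + e * \<eta> q) *\<^sub>R grad \<Psi>t q) p)
              = e * c p" if p: "p \<in> Dom" for p
    proof -
      have dv: "divg (\<lambda>q. (\<rho> q + e * \<eta> q) *\<^sub>R grad f q) p
          = divg (\<lambda>q. \<rho> q *\<^sub>R grad f q) p + e * divg (\<lambda>q. \<eta> q *\<^sub>R grad f q) p" if "C2 f" for f
      proof -
        have "(\<lambda>q. (\<rho> q + e * \<eta> q) *\<^sub>R grad f q) = (\<lambda>q. \<rho> q *\<^sub>R grad f q + e *\<^sub>R (\<eta> q *\<^sub>R grad f q))"
          by (auto simp: fun_eq_iff algebra_simps)
        thus ?thesis
          by (simp only:) (rule divg_lin[OF p], auto simp: C1_mult C1_grad that C\<rho> C2_C1[OF C\<eta>])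
      qed
      have ds: "dS (\<lambda>p. \<rho> p + e * \<eta> p) p = dS \<rho> p + e * dS \<eta> p"
        unfolding dS_def by (rule pd_lin[OF p C\<rho> C2_C1[OF C\<eta>]])
      have dt: "dT (\<lambda>p. \<rho> p + e * \<eta> p) p = dT \<rho> p + e * dT \<eta> p"
        unfolding dT_def by (rule pd_lin[OF p C\<rho> C2_C1[OF C\<eta>]])
      show ?thesis
      proof -
        have "dS \<rho> p = - divg (\<lambda>q. \<rho> q *\<^sub>R grad \<Psi>s q) p" "dT \<rho> p = - divg (\<lambda>q. \<rho> q *\<^sub>R grad \<Psi>t q) p"
          using cont_s[OF p] cont_t[OF p] by linarith+
        thus ?thesis unfolding ds dt dv[OF C\<Psi>s] dv[OF C\<Psi>t] c_def by (simp add: algebra_simps)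
      qed
    qed
    have X: "xint (\<lambda>p. \<Phi>s p * (dS (\<lambda>p. \<rho> p + e * \<eta> p) p + divg (\<lambda>q. (\<rho> q + e * \<eta> q) *\<^sub>R grad \<Psi>s q) p)
                + \<Phi>t p * (dT (\<lambda>p. \<rho> p + e * \<eta> p) p + divg (\<lambda>q. (\<rho> q + e * \<eta> q) *\<^sub>R grad \<Psi>t q) p)) s t
          = e * CC s t"
      unfolding CC_def xint_cmult[symmetric] by (rule xint_cong) (rule pw[OF pDom[OF sq]])
    show ?thesis unfolding F_def Bc X ..
  qed
  have D: "((\<lambda>e. set_lebesgue_integral lborel {0..1} (\<lambda>s. set_lebesgue_integral lborel {0..1} (\<lambda>t. F e s t)))
     has_real_derivative integral (cbox (0,0) (1,1)) (\<lambda>z. if z \<in> {0<..<1} \<times> {0<..<1}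
        then A (fst z) (snd z) / (2 * B0 (fst z) (snd z)) + CC (fst z) (snd z) else 0)) (at 0)"
  proof -
    have Bp: "B0 s t > 0" if "(s,t) \<in> {0<..<1} \<times> {0<..<1}" for s t
      using B_pos that by (auto simp: B0_def)
    have Bi: "set_integrable lborel ({0..1} \<times> {0..1}) (\<lambda>(s, t). B0 s t)" unfolding B0_def by (rule B_int)
    show ?thesis
      by (rule lag_quad[where Bz=B0 and KK=K2, OF Bi Bp cB0[unfolded Sq_def] cA[unfolded Sq_def]
          cBb[unfolded Sq_def] cCC[unfolded Sq_def] K2 zer[unfolded Sq_def] Fdec[unfolded Sq_def]])
  qed
  define h where "h = (\<lambda>p. dS (\<lambda>q. \<Phi>s q * \<eta> q) p + dT (\<lambda>q. \<Phi>t q * \<eta> q) p)"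
  have nh: "nice h" unfolding h_def dS_def dT_def
    by (intro nice_add nice_pd C1_mult C2_C1 C\<Phi>s C\<Phi>t C\<eta>) (auto simp: \<eta>z)
  have integ: "(\<lambda>z. if z \<in> {0<..<1} \<times> {0<..<1} then A (fst z) (snd z) / (2 * B0 (fst z) (snd z)) + CC (fst z) (snd z) else 0)
      = (\<lambda>z. xint h (fst z) (snd z))"
  proof (rule ext)
    fix z :: "real \<times> real"
    obtain s t where z: "z = (s,t)" by (cases z)
    show "(if z \<in> {0<..<1} \<times> {0<..<1} then A (fst z) (snd z) / (2 * B0 (fst z) (snd z)) + CC (fst z) (snd z) else 0)
      = xint h (fst z) (snd z)"
    proof (cases "(s,t) \<in> Sq")
      case True
      have st: "s \<in> {0<..<1}" "t \<in> {0<..<1}" using st_of[OF True] by auto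
      have eqr: "dS \<Phi>s (s,t,x) + dT \<Phi>t (s,t,x) + grad \<Phi>s (s,t,x) \<bullet> grad \<Psi>s (s,t,x)
        + grad \<Phi>t (s,t,x) \<bullet> grad \<Psi>t (s,t,x)
        - (1/B0 s t) * ((1/2) * (grad \<Psi>s (s,t,x) \<bullet> grad \<Psi>s (s,t,x)) * Gtt s t
           + (1/2) * (grad \<Psi>t (s,t,x) \<bullet> grad \<Psi>t (s,t,x)) * Gss s t
           - (grad \<Psi>t (s,t,x) \<bullet> grad \<Psi>s (s,t,x)) * Gst s t) = 0" for x
        using eq_rho[OF pDom[OF True, of x]]
        by (simp add: Let_def G_sym[of \<Psi>t \<Psi>s \<rho> s t] B0_def Gss_def Gtt_def Gst_def)
      note dr = drho[OF st C\<Psi>s C\<Psi>t C\<Phi>s C\<Phi>t C\<eta> \<eta>z eqr]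
      have "A s t / (2 * B0 s t) + CC s t = xint h s t"
        unfolding A_def gss_def gtt_def gst_def CC_def T_def[abs_def] c_def[abs_def] h_def
        using dr by simp
      thus ?thesis using True by (simp add: z Sq_def)
    next
      case False
      have "xint h s t = 0" by (rule nice_out[OF nh Sq_out]) (use False in \<open>simp add: Sq_def\<close>)
      thus ?thesis using False by (auto simp: z Sq_def)
    qed
  qed
  have "integral (cbox (0,0) (1,1)) (\<lambda>z. xint h (fst z) (snd z)) = 0"
    unfolding h_def by (rule dd_zero[OF C\<Phi>s C\<Phi>t C\<eta> \<eta>z])
  thus ?thesis using D unfolding LagF integ by simp
qed

end


context kbox begin

lemma grad_psi:
  assumes "p \<in> Dom" "C2 \<Psi>" "C2 \<eta>"
  shows "grad (\<lambda>p. \<Psi> p + e * \<eta> p) p = grad \<Psi> p + e *\<^sub>R grad \<eta> p"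
  by (rule grad_lin[OF assms(1) C2_C1[OF assms(2)] C2_C1[OF assms(3)]])

lemma Gpsi1:
  assumes st: "s \<in> {0<..<1}" "t \<in> {0<..<1}" and C\<rho>: "C1 \<rho>" and C\<Psi>: "C2 \<Psi>" and C\<eta>: "C2 \<eta>"
    and \<eta>z: "\<And>p. p \<notin> K \<Longrightarrow> \<eta> p = 0"
    and int: "integrable lborel (\<lambda>x. (grad \<Psi> (s,t,x) \<bullet> grad \<Psi> (s,t,x)) * \<rho> (s,t,x))"
  shows "G (\<lambda>p. \<Psi> p + e * \<eta> p) (\<lambda>p. \<Psi> p + e * \<eta> p) \<rho> s t = G \<Psi> \<Psi> \<rho> s t
     + e * (2 * xint (\<lambda>p. (grad \<Psi> p \<bullet> grad \<eta> p) * \<rho> p) s t) + e^2 * xint (\<lambda>p. (grad \<eta> p \<bullet> grad \<eta> p) * \<rho> p) s t"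
proof -
  have n1: "nice (\<lambda>p. (grad \<Psi> p \<bullet> grad \<eta> p) * \<rho> p)"
    by (intro nice_mult2 nice_inner_grad C\<Psi> C\<eta> \<eta>z C1_cont[OF C\<rho>])
  have n2: "nice (\<lambda>p. (grad \<eta> p \<bullet> grad \<eta> p) * \<rho> p)"
    by (intro nice_mult2 nice_inner_grad C\<eta> \<eta>z C1_cont[OF C\<rho>])
  have "G (\<lambda>p. \<Psi> p + e * \<eta> p) (\<lambda>p. \<Psi> p + e * \<eta> p) \<rho> s t
     = xint (\<lambda>p. ((grad \<Psi> p \<bullet> grad \<Psi> p) * \<rho> p + e * (2 * ((grad \<Psi> p \<bullet> grad \<eta> p) * \<rho> p)))
        + e^2 * ((grad \<eta> p \<bullet> grad \<eta> p) * \<rho> p)) s t"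
    unfolding G_def
  proof (rule xint_cong)
    fix x :: "real^'n"
    have "(s,t,x) \<in> Dom" using st by (simp add: Dom_iff)
    thus "(grad (\<lambda>p. \<Psi> p + e * \<eta> p) (s,t,x) \<bullet> grad (\<lambda>p. \<Psi> p + e * \<eta> p) (s,t,x)) * \<rho> (s,t,x) =
      ((grad \<Psi> (s,t,x) \<bullet> grad \<Psi> (s,t,x)) * \<rho> (s,t,x) + e * (2 * ((grad \<Psi> (s,t,x) \<bullet> grad \<eta> (s,t,x)) * \<rho> (s,t,x))))
        + e^2 * ((grad \<eta> (s,t,x) \<bullet> grad \<eta> (s,t,x)) * \<rho> (s,t,x))"
      by (simp add: grad_psi C\<Psi> C\<eta> inner_add_left inner_add_right inner_commute[of "grad \<eta> (s,t,x)" "grad \<Psi> (s,t,x)"]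
           algebra_simps power2_eq_square)
  qed
  also have "\<dots> = G \<Psi> \<Psi> \<rho> s t + e * (2 * xint (\<lambda>p. (grad \<Psi> p \<bullet> grad \<eta> p) * \<rho> p) s t)
      + e^2 * xint (\<lambda>p. (grad \<eta> p \<bullet> grad \<eta> p) * \<rho> p) s t"
    unfolding G_def
    by (subst xint_add, rule Bochner_Integration.integrable_add[OF int], 
        (intro integrable_mult_right nice_int n1 n2)+,
        subst xint_add[OF int], (intro integrable_mult_right nice_int n1 n2)+)
       (simp only: xint_cmult)
  finally show ?thesis .
qed

lemma Gpsi2:
  assumes st: "s \<in> {0<..<1}" "t \<in> {0<..<1}" and C\<rho>: "C1 \<rho>" and C\<Psi>: "C2 \<Psi>" and C\<Psi>': "C2 \<Psi>'" and C\<eta>: "C2 \<eta>"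
    and \<eta>z: "\<And>p. p \<notin> K \<Longrightarrow> \<eta> p = 0"
    and int: "integrable lborel (\<lambda>x. (grad \<Psi> (s,t,x) \<bullet> grad \<Psi>' (s,t,x)) * \<rho> (s,t,x))"
  shows "G (\<lambda>p. \<Psi> p + e * \<eta> p) \<Psi>' \<rho> s t = G \<Psi> \<Psi>' \<rho> s t + e * xint (\<lambda>p. (grad \<eta> p \<bullet> grad \<Psi>' p) * \<rho> p) s t"
proof -
  have n1: "nice (\<lambda>p. (grad \<eta> p \<bullet> grad \<Psi>' p) * \<rho> p)"
    by (intro nice_mult2 nice_inner_grad' C\<Psi>' C\<eta> \<eta>z C1_cont[OF C\<rho>])
  have "G (\<lambda>p. \<Psi> p + e * \<eta> p) \<Psi>' \<rho> s t
     = xint (\<lambda>p. (grad \<Psi> p \<bullet> grad \<Psi>' p) * \<rho> p + e * ((grad \<eta> p \<bullet> grad \<Psi>' p) * \<rho> p)) s t"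
    unfolding G_def
  proof (rule xint_cong)
    fix x :: "real^'n"
    have "(s,t,x) \<in> Dom" using st by (simp add: Dom_iff)
    thus "(grad (\<lambda>p. \<Psi> p + e * \<eta> p) (s,t,x) \<bullet> grad \<Psi>' (s,t,x)) * \<rho> (s,t,x) =
      (grad \<Psi> (s,t,x) \<bullet> grad \<Psi>' (s,t,x)) * \<rho> (s,t,x) + e * ((grad \<eta> (s,t,x) \<bullet> grad \<Psi>' (s,t,x)) * \<rho> (s,t,x))"
      by (simp add: grad_psi C\<Psi> C\<eta> inner_add_left algebra_simps)
  qed
  also have "\<dots> = G \<Psi> \<Psi>' \<rho> s t + e * xint (\<lambda>p. (grad \<eta> p \<bullet> grad \<Psi>' p) * \<rho> p) s t"
    unfolding G_def by (subst xint_add[OF int], intro integrable_mult_right nice_int n1) (simp only: xint_cmult)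
  finally show ?thesis .
qed

lemma divg_psi:
  assumes p: "p \<in> Dom" and C\<rho>: "C1 \<rho>" and C\<Psi>: "C2 \<Psi>" and C\<eta>: "C2 \<eta>"
  shows "divg (\<lambda>q. \<rho> q *\<^sub>R grad (\<lambda>p. \<Psi> p + e * \<eta> p) q) p
       = divg (\<lambda>q. \<rho> q *\<^sub>R grad \<Psi> q) p + e * divg (\<lambda>q. \<rho> q *\<^sub>R grad \<eta> q) p"
proof -
  have "divg (\<lambda>q. \<rho> q *\<^sub>R grad (\<lambda>p. \<Psi> p + e * \<eta> p) q) p
      = divg (\<lambda>q. \<rho> q *\<^sub>R grad \<Psi> q + e *\<^sub>R (\<rho> q *\<^sub>R grad \<eta> q)) p"
    by (rule divg_local[OF p]) (simp add: grad_psi C\<Psi> C\<eta> algebra_simps)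
  also have "\<dots> = divg (\<lambda>q. \<rho> q *\<^sub>R grad \<Psi> q) p + e * divg (\<lambda>q. \<rho> q *\<^sub>R grad \<eta> q) p"
    by (rule divg_lin[OF p]) (auto simp: C1_mult C1_grad C\<rho> C\<Psi> C\<eta>)
  finally show ?thesis .
qed


lemma var_psis:
  fixes \<rho> \<Psi>s \<Psi>t \<Phi>s \<Phi>t \<eta> :: "'n pt \<Rightarrow> real"
  assumes C\<rho>: "C1 \<rho>" and C\<Psi>s: "C2 \<Psi>s" and C\<Psi>t: "C2 \<Psi>t" and C\<Phi>s: "C2 \<Phi>s" and C\<Phi>t: "C2 \<Phi>t"
    and C\<eta>: "C2 \<eta>" and \<eta>z: "\<And>p. p \<notin> K \<Longrightarrow> \<eta> p = 0"
    and gram_int: "\<And>s t. s \<in> {0<..<1} \<Longrightarrow> t \<in> {0<..<1} \<Longrightarrow>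
        integrable lborel (\<lambda>x. (grad \<Psi>s (s, t, x) \<bullet> grad \<Psi>s (s, t, x)) * \<rho> (s, t, x))
      \<and> integrable lborel (\<lambda>x. (grad \<Psi>t (s, t, x) \<bullet> grad \<Psi>t (s, t, x)) * \<rho> (s, t, x))
      \<and> integrable lborel (\<lambda>x. (grad \<Psi>s (s, t, x) \<bullet> grad \<Psi>t (s, t, x)) * \<rho> (s, t, x))"
    and gc1: "continuous_on ({0<..<1} \<times> {0<..<1}) (\<lambda>z. G \<Psi>s \<Psi>s \<rho> (fst z) (snd z))"
    and gc2: "continuous_on ({0<..<1} \<times> {0<..<1}) (\<lambda>z. G \<Psi>t \<Psi>t \<rho> (fst z) (snd z))"
    and gc3: "continuous_on ({0<..<1} \<times> {0<..<1}) (\<lambda>z. G \<Psi>s \<Psi>t \<rho> (fst z) (snd z))"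
    and B_pos: "\<And>s t. s \<in> {0<..<1} \<Longrightarrow> t \<in> {0<..<1} \<Longrightarrow> Bcost \<Psi>s \<Psi>t \<rho> s t > 0"
    and B_int: "set_integrable lborel ({0..1} \<times> {0..1}) (\<lambda>(s, t). Bcost \<Psi>s \<Psi>t \<rho> s t)"
    and cont_s: "\<And>p. p \<in> Dom \<Longrightarrow> dS \<rho> p + divg (\<lambda>q. \<rho> q *\<^sub>R grad \<Psi>s q) p = 0"
    and cont_t: "\<And>p. p \<in> Dom \<Longrightarrow> dT \<rho> p + divg (\<lambda>q. \<rho> q *\<^sub>R grad \<Psi>t q) p = 0"
    and eq_s: "\<And>p. p \<in> Dom \<Longrightarrow>
        (let s = fst p; t = fst (snd p) in
          (1 / Bcost \<Psi>s \<Psi>t \<rho> s t) *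
            divg (\<lambda>q. \<rho> q *\<^sub>R (G \<Psi>t \<Psi>t \<rho> s t *\<^sub>R grad \<Psi>s q - G \<Psi>s \<Psi>t \<rho> s t *\<^sub>R grad \<Psi>t q)) p
          = divg (\<lambda>q. \<rho> q *\<^sub>R grad \<Phi>s q) p)"
  shows "((\<lambda>e. Lag \<rho> (\<lambda>p. \<Psi>s p + e * \<eta> p) \<Psi>t \<Phi>s \<Phi>t) has_real_derivative 0) (at 0)"
proof -
  define Sq where "Sq = {0<..<1::real} \<times> {0<..<1::real}"
  define Gss where "Gss s t = G \<Psi>s \<Psi>s \<rho> s t" for s t
  define Gtt where "Gtt s t = G \<Psi>t \<Psi>t \<rho> s t" for s t
  define Gst where "Gst s t = G \<Psi>s \<Psi>t \<rho> s t" for s t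
  define h1 where "h1 s t = xint (\<lambda>p. (grad \<Psi>s p \<bullet> grad \<eta> p) * \<rho> p) s t" for s t
  define k where "k s t = xint (\<lambda>p. (grad \<eta> p \<bullet> grad \<eta> p) * \<rho> p) s t" for s t
  define h2 where "h2 s t = xint (\<lambda>p. (grad \<eta> p \<bullet> grad \<Psi>t p) * \<rho> p) s t" for s t
  define c where "c p = \<Phi>s p * divg (\<lambda>q. \<rho> q *\<^sub>R grad \<eta> q) p" for p
  define A where "A s t = 2 * h1 s t * Gtt s t - 2 * Gst s t * h2 s t" for s t
  define Bb where "Bb s t = k s t * Gtt s t - (h2 s t)^2" for s t
  define CC where "CC s t = xint c s t" for s t
  define B0 where "B0 s t = Bcost \<Psi>s \<Psi>t \<rho> s t" for s t
  define F where "F e s t = Bcost (\<lambda>p. \<Psi>s p + e * \<eta> p) \<Psi>t \<rho> s t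
      + xint (\<lambda>p. \<Phi>s p * (dS \<rho> p + divg (\<lambda>q. \<rho> q *\<^sub>R grad (\<lambda>p. \<Psi>s p + e * \<eta> p) q) p)
                + \<Phi>t p * (dT \<rho> p + divg (\<lambda>q. \<rho> q *\<^sub>R grad \<Psi>t q) p)) s t"
    for e s t
  have LagF: "(\<lambda>e. Lag \<rho> (\<lambda>p. \<Psi>s p + e * \<eta> p) \<Psi>t \<Phi>s \<Phi>t)
      = (\<lambda>e. set_lebesgue_integral lborel {0..1} (\<lambda>s. set_lebesgue_integral lborel {0..1} (\<lambda>t. F e s t)))"
    by (simp add: Lag_def F_def)
  have st_of: "s \<in> {0<..<1} \<and> t \<in> {0<..<1}" if "(s,t) \<in> Sq" for s t using that by (simp add: Sq_def)
  have pDom: "(s,t,x) \<in> Dom" if "(s,t) \<in> Sq" for s t x using that by (simp add: Sq_def Dom_iff)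
  have n1: "nice (\<lambda>p. (grad \<Psi>s p \<bullet> grad \<eta> p) * \<rho> p)"
    by (intro nice_mult2 nice_inner_grad C\<Psi>s C\<eta> \<eta>z C1_cont[OF C\<rho>])
  have nk: "nice (\<lambda>p. (grad \<eta> p \<bullet> grad \<eta> p) * \<rho> p)"
    by (intro nice_mult2 nice_inner_grad C\<eta> \<eta>z C1_cont[OF C\<rho>])
  have n2: "nice (\<lambda>p. (grad \<eta> p \<bullet> grad \<Psi>t p) * \<rho> p)"
    by (intro nice_mult2 nice_inner_grad' C\<Psi>t C\<eta> \<eta>z C1_cont[OF C\<rho>])
  have nc: "nice c" unfolding c_def[abs_def]
    by (intro nice_mult1 nice_divg C1_cont[OF C2_C1[OF C\<Phi>s]])
       (auto simp: C1_mult C1_grad C\<rho> C\<eta> grad_zero_off[OF \<eta>z])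
  have cS: "continuous_on Sq (\<lambda>z. xint h (fst z) (snd z))" if "nice h" for h
    using nice_xcont[OF that] by (rule continuous_on_subset) simp
  have cA: "continuous_on Sq (\<lambda>z. A (fst z) (snd z))"
    unfolding A_def h1_def h2_def Gtt_def Gst_def
    by (intro continuous_intros cS n1 n2 gc2[folded Sq_def] gc3[folded Sq_def])
  have cBb: "continuous_on Sq (\<lambda>z. Bb (fst z) (snd z))"
    unfolding Bb_def k_def h2_def Gtt_def by (intro continuous_intros cS nk n2 gc2[folded Sq_def])
  have cCC: "continuous_on Sq (\<lambda>z. CC (fst z) (snd z))" unfolding CC_def by (rule cS[OF nc])
  have cB0: "continuous_on Sq (\<lambda>z. B0 (fst z) (snd z))"
    unfolding B0_def Bcost_def
    by (intro continuous_intros gc1[folded Sq_def] gc2[folded Sq_def] gc3[folded Sq_def])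
  have zer: "A s t = 0 \<and> Bb s t = 0 \<and> CC s t = 0" if "(s,t) \<in> Sq" "(s,t) \<notin> K2" for s t
  proof -
    have "h1 s t = 0" "k s t = 0" "h2 s t = 0" "CC s t = 0"
      unfolding h1_def k_def h2_def CC_def by (intro nice_out n1 nk n2 nc K2_out that(2))+
    thus ?thesis by (simp add: A_def Bb_def)
  qed
  have Fdec: "F e s t = sqrt ((B0 s t)^2 + e * A s t + e^2 * Bb s t) + e * CC s t" if sq: "(s,t) \<in> Sq" for e s t
  proof -
    have st: "s \<in> {0<..<1}" "t \<in> {0<..<1}" using st_of[OF sq] by auto
    have ss: "G (\<lambda>p. \<Psi>s p + e * \<eta> p) (\<lambda>p. \<Psi>s p + e * \<eta> p) \<rho> s t = Gss s t + e * (2 * h1 s t) + e^2 * k s t"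
      unfolding Gss_def h1_def k_def using gram_int[OF st] by (intro Gpsi1 st C\<rho> C\<Psi>s C\<eta> \<eta>z) auto
    have sst: "G (\<lambda>p. \<Psi>s p + e * \<eta> p) \<Psi>t \<rho> s t = Gst s t + e * h2 s t"
      unfolding Gst_def h2_def using gram_int[OF st] by (intro Gpsi2 st C\<rho> C\<Psi>s C\<Psi>t C\<eta> \<eta>z) auto
    have B2: "(B0 s t)^2 = Gss s t * Gtt s t - (Gst s t)^2"
      unfolding B0_def Gss_def Gtt_def Gst_def by (rule B_sq[OF B_pos[OF st]])
    have Bc: "Bcost (\<lambda>p. \<Psi>s p + e * \<eta> p) \<Psi>t \<rho> s t = sqrt ((B0 s t)^2 + e * A s t + e^2 * Bb s t)"
      unfolding Bcost_def ss sst B2 A_def Bb_def Gtt_def[symmetric] by (simp add: algebra_simps power2_eq_square)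
    have pw: "\<Phi>s p * (dS \<rho> p + divg (\<lambda>q. \<rho> q *\<^sub>R grad (\<lambda>p. \<Psi>s p + e * \<eta> p) q) p)
                + \<Phi>t p * (dT \<rho> p + divg (\<lambda>q. \<rho> q *\<^sub>R grad \<Psi>t q) p) = e * c p" if p: "p \<in> Dom" for p
    proof -
      have "dS \<rho> p = - divg (\<lambda>q. \<rho> q *\<^sub>R grad \<Psi>s q) p" "dT \<rho> p + divg (\<lambda>q. \<rho> q *\<^sub>R grad \<Psi>t q) p = 0"
        using cont_s[OF p] cont_t[OF p] by linarith+
      thus ?thesis unfolding divg_psi[OF p C\<rho> C\<Psi>s C\<eta>] c_def by (simp add: algebra_simps)
    qed
    have X: "xint (\<lambda>p. \<Phi>s p * (dS \<rho> p + divg (\<lambda>q. \<rho> q *\<^sub>R grad (\<lambda>p. \<Psi>s p + e * \<eta> p) q) p)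
                + \<Phi>t p * (dT \<rho> p + divg (\<lambda>q. \<rho> q *\<^sub>R grad \<Psi>t q) p)) s t = e * CC s t"
      unfolding CC_def xint_cmult[symmetric] by (rule xint_cong) (rule pw[OF pDom[OF sq]])
    show ?thesis unfolding F_def Bc X ..
  qed
  have D: "((\<lambda>e. set_lebesgue_integral lborel {0..1} (\<lambda>s. set_lebesgue_integral lborel {0..1} (\<lambda>t. F e s t)))
     has_real_derivative integral (cbox (0,0) (1,1)) (\<lambda>z. if z \<in> {0<..<1} \<times> {0<..<1}
        then A (fst z) (snd z) / (2 * B0 (fst z) (snd z)) + CC (fst z) (snd z) else 0)) (at 0)"
  proof -
    have Bp: "B0 s t > 0" if "(s,t) \<in> {0<..<1} \<times> {0<..<1}" for s t
      using B_pos that by (auto simp: B0_def)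
    have Bi: "set_integrable lborel ({0..1} \<times> {0..1}) (\<lambda>(s, t). B0 s t)" unfolding B0_def by (rule B_int)
    show ?thesis
      by (rule lag_quad[where Bz=B0 and KK=K2, OF Bi Bp cB0[unfolded Sq_def] cA[unfolded Sq_def]
          cBb[unfolded Sq_def] cCC[unfolded Sq_def] K2 zer[unfolded Sq_def] Fdec[unfolded Sq_def]])
  qed
  have integ: "(\<lambda>z. if z \<in> {0<..<1} \<times> {0<..<1} then A (fst z) (snd z) / (2 * B0 (fst z) (snd z)) + CC (fst z) (snd z) else 0)
      = (\<lambda>z. 0)"
  proof (rule ext)
    fix z :: "real \<times> real"
    obtain s t where z: "z = (s,t)" by (cases z)
    show "(if z \<in> {0<..<1} \<times> {0<..<1} then A (fst z) (snd z) / (2 * B0 (fst z) (snd z)) + CC (fst z) (snd z) else 0) = 0"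
    proof (cases "(s,t) \<in> Sq")
      case True
      have st: "s \<in> {0<..<1}" "t \<in> {0<..<1}" using st_of[OF True] by auto
      have eq: "(1/B0 s t) * divg (\<lambda>q. \<rho> q *\<^sub>R (Gtt s t *\<^sub>R grad \<Psi>s q - Gst s t *\<^sub>R grad \<Psi>t q)) (s,t,x)
               = divg (\<lambda>q. \<rho> q *\<^sub>R grad \<Phi>s q) (s,t,x)" for x
        using eq_s[OF pDom[OF True, of x]] by (simp add: Let_def B0_def Gtt_def Gst_def)
      have dz: "(Gtt s t * h1 s t - Gst s t * h2 s t) / B0 s t + CC s t = 0"
        unfolding h1_def h2_def CC_def c_def[abs_def]
        by (rule dzero[OF st C\<rho> C\<Psi>s C\<Psi>t C\<Phi>s C\<eta> \<eta>z eq])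
      have "B0 s t > 0" using B_pos[OF st] by (simp add: B0_def)
      hence "A s t / (2 * B0 s t) = (Gtt s t * h1 s t - Gst s t * h2 s t) / B0 s t"
        unfolding A_def by (simp add: field_simps)
      thus ?thesis using True dz by (simp add: z Sq_def)
    next
      case False thus ?thesis by (auto simp: z Sq_def)
    qed
  qed
  show ?thesis using D unfolding LagF integ by simp
qed


lemma var_psit:
  fixes \<rho> \<Psi>s \<Psi>t \<Phi>s \<Phi>t \<eta> :: "'n pt \<Rightarrow> real"
  assumes C\<rho>: "C1 \<rho>" and C\<Psi>s: "C2 \<Psi>s" and C\<Psi>t: "C2 \<Psi>t" and C\<Phi>s: "C2 \<Phi>s" and C\<Phi>t: "C2 \<Phi>t"
    and C\<eta>: "C2 \<eta>" and \<eta>z: "\<And>p. p \<notin> K \<Longrightarrow> \<eta> p = 0"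
    and gram_int: "\<And>s t. s \<in> {0<..<1} \<Longrightarrow> t \<in> {0<..<1} \<Longrightarrow>
        integrable lborel (\<lambda>x. (grad \<Psi>s (s, t, x) \<bullet> grad \<Psi>s (s, t, x)) * \<rho> (s, t, x))
      \<and> integrable lborel (\<lambda>x. (grad \<Psi>t (s, t, x) \<bullet> grad \<Psi>t (s, t, x)) * \<rho> (s, t, x))
      \<and> integrable lborel (\<lambda>x. (grad \<Psi>s (s, t, x) \<bullet> grad \<Psi>t (s, t, x)) * \<rho> (s, t, x))"
    and gc1: "continuous_on ({0<..<1} \<times> {0<..<1}) (\<lambda>z. G \<Psi>s \<Psi>s \<rho> (fst z) (snd z))"
    and gc2: "continuous_on ({0<..<1} \<times> {0<..<1}) (\<lambda>z. G \<Psi>t \<Psi>t \<rho> (fst z) (snd z))"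
    and gc3: "continuous_on ({0<..<1} \<times> {0<..<1}) (\<lambda>z. G \<Psi>s \<Psi>t \<rho> (fst z) (snd z))"
    and B_pos: "\<And>s t. s \<in> {0<..<1} \<Longrightarrow> t \<in> {0<..<1} \<Longrightarrow> Bcost \<Psi>s \<Psi>t \<rho> s t > 0"
    and B_int: "set_integrable lborel ({0..1} \<times> {0..1}) (\<lambda>(s, t). Bcost \<Psi>s \<Psi>t \<rho> s t)"
    and cont_s: "\<And>p. p \<in> Dom \<Longrightarrow> dS \<rho> p + divg (\<lambda>q. \<rho> q *\<^sub>R grad \<Psi>s q) p = 0"
    and cont_t: "\<And>p. p \<in> Dom \<Longrightarrow> dT \<rho> p + divg (\<lambda>q. \<rho> q *\<^sub>R grad \<Psi>t q) p = 0"
    and eq_t: "\<And>p. p \<in> Dom \<Longrightarrow>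
        (let s = fst p; t = fst (snd p) in
          (1 / Bcost \<Psi>s \<Psi>t \<rho> s t) *
            divg (\<lambda>q. \<rho> q *\<^sub>R (G \<Psi>s \<Psi>s \<rho> s t *\<^sub>R grad \<Psi>t q - G \<Psi>s \<Psi>t \<rho> s t *\<^sub>R grad \<Psi>s q)) p
          = divg (\<lambda>q. \<rho> q *\<^sub>R grad \<Phi>t q) p)"
  shows "((\<lambda>e. Lag \<rho> \<Psi>s (\<lambda>p. \<Psi>t p + e * \<eta> p) \<Phi>s \<Phi>t) has_real_derivative 0) (at 0)"
proof -
  define Sq where "Sq = {0<..<1::real} \<times> {0<..<1::real}"
  define Gss where "Gss s t = G \<Psi>s \<Psi>s \<rho> s t" for s t
  define Gtt where "Gtt s t = G \<Psi>t \<Psi>t \<rho> s t" for s t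
  define Gst where "Gst s t = G \<Psi>s \<Psi>t \<rho> s t" for s t
  define h1 where "h1 s t = xint (\<lambda>p. (grad \<Psi>t p \<bullet> grad \<eta> p) * \<rho> p) s t" for s t
  define k where "k s t = xint (\<lambda>p. (grad \<eta> p \<bullet> grad \<eta> p) * \<rho> p) s t" for s t
  define h2 where "h2 s t = xint (\<lambda>p. (grad \<eta> p \<bullet> grad \<Psi>s p) * \<rho> p) s t" for s t
  define c where "c p = \<Phi>t p * divg (\<lambda>q. \<rho> q *\<^sub>R grad \<eta> q) p" for p
  define A where "A s t = 2 * Gss s t * h1 s t - 2 * Gst s t * h2 s t" for s t
  define Bb where "Bb s t = Gss s t * k s t - (h2 s t)^2" for s t
  define CC where "CC s t = xint c s t" for s t
  define B0 where "B0 s t = Bcost \<Psi>s \<Psi>t \<rho> s t" for s t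
  define F where "F e s t = Bcost \<Psi>s (\<lambda>p. \<Psi>t p + e * \<eta> p) \<rho> s t
      + xint (\<lambda>p. \<Phi>s p * (dS \<rho> p + divg (\<lambda>q. \<rho> q *\<^sub>R grad \<Psi>s q) p)
                + \<Phi>t p * (dT \<rho> p + divg (\<lambda>q. \<rho> q *\<^sub>R grad (\<lambda>p. \<Psi>t p + e * \<eta> p) q) p)) s t"
    for e s t
  have LagF: "(\<lambda>e. Lag \<rho> \<Psi>s (\<lambda>p. \<Psi>t p + e * \<eta> p) \<Phi>s \<Phi>t)
      = (\<lambda>e. set_lebesgue_integral lborel {0..1} (\<lambda>s. set_lebesgue_integral lborel {0..1} (\<lambda>t. F e s t)))"
    by (simp add: Lag_def F_def)
  have st_of: "s \<in> {0<..<1} \<and> t \<in> {0<..<1}" if "(s,t) \<in> Sq" for s t using that by (simp add: Sq_def)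
  have pDom: "(s,t,x) \<in> Dom" if "(s,t) \<in> Sq" for s t x using that by (simp add: Sq_def Dom_iff)
  have n1: "nice (\<lambda>p. (grad \<Psi>t p \<bullet> grad \<eta> p) * \<rho> p)"
    by (intro nice_mult2 nice_inner_grad C\<Psi>t C\<eta> \<eta>z C1_cont[OF C\<rho>])
  have nk: "nice (\<lambda>p. (grad \<eta> p \<bullet> grad \<eta> p) * \<rho> p)"
    by (intro nice_mult2 nice_inner_grad C\<eta> \<eta>z C1_cont[OF C\<rho>])
  have n2: "nice (\<lambda>p. (grad \<eta> p \<bullet> grad \<Psi>s p) * \<rho> p)"
    by (intro nice_mult2 nice_inner_grad' C\<Psi>s C\<eta> \<eta>z C1_cont[OF C\<rho>])
  have nc: "nice c" unfolding c_def[abs_def]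
    by (intro nice_mult1 nice_divg C1_cont[OF C2_C1[OF C\<Phi>t]])
       (auto simp: C1_mult C1_grad C\<rho> C\<eta> grad_zero_off[OF \<eta>z])
  have cS: "continuous_on Sq (\<lambda>z. xint h (fst z) (snd z))" if "nice h" for h
    using nice_xcont[OF that] by (rule continuous_on_subset) simp
  have cA: "continuous_on Sq (\<lambda>z. A (fst z) (snd z))"
    unfolding A_def h1_def h2_def Gss_def Gst_def
    by (intro continuous_intros cS n1 n2 gc1[folded Sq_def] gc3[folded Sq_def])
  have cBb: "continuous_on Sq (\<lambda>z. Bb (fst z) (snd z))"
    unfolding Bb_def k_def h2_def Gss_def by (intro continuous_intros cS nk n2 gc1[folded Sq_def])
  have cCC: "continuous_on Sq (\<lambda>z. CC (fst z) (snd z))" unfolding CC_def by (rule cS[OF nc])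
  have cB0: "continuous_on Sq (\<lambda>z. B0 (fst z) (snd z))"
    unfolding B0_def Bcost_def
    by (intro continuous_intros gc1[folded Sq_def] gc2[folded Sq_def] gc3[folded Sq_def])
  have zer: "A s t = 0 \<and> Bb s t = 0 \<and> CC s t = 0" if "(s,t) \<in> Sq" "(s,t) \<notin> K2" for s t
  proof -
    have "h1 s t = 0" "k s t = 0" "h2 s t = 0" "CC s t = 0"
      unfolding h1_def k_def h2_def CC_def by (intro nice_out n1 nk n2 nc K2_out that(2))+
    thus ?thesis by (simp add: A_def Bb_def)
  qed
  have Fdec: "F e s t = sqrt ((B0 s t)^2 + e * A s t + e^2 * Bb s t) + e * CC s t" if sq: "(s,t) \<in> Sq" for e s t
  proof -
    have st: "s \<in> {0<..<1}" "t \<in> {0<..<1}" using st_of[OF sq] by auto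
    have tt: "G (\<lambda>p. \<Psi>t p + e * \<eta> p) (\<lambda>p. \<Psi>t p + e * \<eta> p) \<rho> s t = Gtt s t + e * (2 * h1 s t) + e^2 * k s t"
      unfolding Gtt_def h1_def k_def using gram_int[OF st] by (intro Gpsi1 st C\<rho> C\<Psi>t C\<eta> \<eta>z) auto
    have int_ts: "integrable lborel (\<lambda>x. (grad \<Psi>t (s,t,x) \<bullet> grad \<Psi>s (s,t,x)) * \<rho> (s,t,x))"
      using gram_int[OF st] by (simp add: inner_commute)
    have sst: "G \<Psi>s (\<lambda>p. \<Psi>t p + e * \<eta> p) \<rho> s t = Gst s t + e * h2 s t"
      unfolding Gst_def h2_def G_sym[of \<Psi>s "\<lambda>p. \<Psi>t p + e * \<eta> p"] G_sym[of \<Psi>s \<Psi>t]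
      by (rule Gpsi2[OF st C\<rho> C\<Psi>t C\<Psi>s C\<eta> \<eta>z int_ts])
    have B2: "(B0 s t)^2 = Gss s t * Gtt s t - (Gst s t)^2"
      unfolding B0_def Gss_def Gtt_def Gst_def by (rule B_sq[OF B_pos[OF st]])
    have Bc: "Bcost \<Psi>s (\<lambda>p. \<Psi>t p + e * \<eta> p) \<rho> s t = sqrt ((B0 s t)^2 + e * A s t + e^2 * Bb s t)"
      unfolding Bcost_def tt sst B2 A_def Bb_def Gss_def[symmetric] by (simp add: algebra_simps power2_eq_square)
    have pw: "\<Phi>s p * (dS \<rho> p + divg (\<lambda>q. \<rho> q *\<^sub>R grad \<Psi>s q) p)
                + \<Phi>t p * (dT \<rho> p + divg (\<lambda>q. \<rho> q *\<^sub>R grad (\<lambda>p. \<Psi>t p + e * \<eta> p) q) p) = e * c p" if p: "p \<in> Dom" for p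
    proof -
      have "dS \<rho> p + divg (\<lambda>q. \<rho> q *\<^sub>R grad \<Psi>s q) p = 0" "dT \<rho> p = - divg (\<lambda>q. \<rho> q *\<^sub>R grad \<Psi>t q) p"
        using cont_s[OF p] cont_t[OF p] by linarith+
      thus ?thesis unfolding divg_psi[OF p C\<rho> C\<Psi>t C\<eta>] c_def by (simp add: algebra_simps)
    qed
    have X: "xint (\<lambda>p. \<Phi>s p * (dS \<rho> p + divg (\<lambda>q. \<rho> q *\<^sub>R grad \<Psi>s q) p)
                + \<Phi>t p * (dT \<rho> p + divg (\<lambda>q. \<rho> q *\<^sub>R grad (\<lambda>p. \<Psi>t p + e * \<eta> p) q) p)) s t = e * CC s t"
      unfolding CC_def xint_cmult[symmetric] by (rule xint_cong) (rule pw[OF pDom[OF sq]])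
    show ?thesis unfolding F_def Bc X ..
  qed
  have D: "((\<lambda>e. set_lebesgue_integral lborel {0..1} (\<lambda>s. set_lebesgue_integral lborel {0..1} (\<lambda>t. F e s t)))
     has_real_derivative integral (cbox (0,0) (1,1)) (\<lambda>z. if z \<in> {0<..<1} \<times> {0<..<1}
        then A (fst z) (snd z) / (2 * B0 (fst z) (snd z)) + CC (fst z) (snd z) else 0)) (at 0)"
  proof -
    have Bp: "B0 s t > 0" if "(s,t) \<in> {0<..<1} \<times> {0<..<1}" for s t
      using B_pos that by (auto simp: B0_def)
    have Bi: "set_integrable lborel ({0..1} \<times> {0..1}) (\<lambda>(s, t). B0 s t)" unfolding B0_def by (rule B_int)
    show ?thesis
      by (rule lag_quad[where Bz=B0 and KK=K2, OF Bi Bp cB0[unfolded Sq_def] cA[unfolded Sq_def]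
          cBb[unfolded Sq_def] cCC[unfolded Sq_def] K2 zer[unfolded Sq_def] Fdec[unfolded Sq_def]])
  qed
  have integ: "(\<lambda>z. if z \<in> {0<..<1} \<times> {0<..<1} then A (fst z) (snd z) / (2 * B0 (fst z) (snd z)) + CC (fst z) (snd z) else 0)
      = (\<lambda>z. 0)"
  proof (rule ext)
    fix z :: "real \<times> real"
    obtain s t where z: "z = (s,t)" by (cases z)
    show "(if z \<in> {0<..<1} \<times> {0<..<1} then A (fst z) (snd z) / (2 * B0 (fst z) (snd z)) + CC (fst z) (snd z) else 0) = 0"
    proof (cases "(s,t) \<in> Sq")
      case True
      have st: "s \<in> {0<..<1}" "t \<in> {0<..<1}" using st_of[OF True] by auto
      have eq: "(1/B0 s t) * divg (\<lambda>q. \<rho> q *\<^sub>R (Gss s t *\<^sub>R grad \<Psi>t q - Gst s t *\<^sub>R grad \<Psi>s q)) (s,t,x)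
               = divg (\<lambda>q. \<rho> q *\<^sub>R grad \<Phi>t q) (s,t,x)" for x
        using eq_t[OF pDom[OF True, of x]] by (simp add: Let_def B0_def Gss_def Gst_def)
      have dz: "(Gss s t * h1 s t - Gst s t * h2 s t) / B0 s t + CC s t = 0"
        unfolding h1_def h2_def CC_def c_def[abs_def]
        by (rule dzero[OF st C\<rho> C\<Psi>t C\<Psi>s C\<Phi>t C\<eta> \<eta>z eq])
      have "B0 s t > 0" using B_pos[OF st] by (simp add: B0_def)
      hence "A s t / (2 * B0 s t) = (Gss s t * h1 s t - Gst s t * h2 s t) / B0 s t"
        unfolding A_def by (simp add: field_simps)
      thus ?thesis using True dz by (simp add: z Sq_def)
    next
      case False thus ?thesis by (auto simp: z Sq_def)
    qed
  qed
  show ?thesis using D unfolding LagF integ by simp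
qed

lemma var_phis:
  fixes \<rho> \<Psi>s \<Psi>t \<Phi>s \<Phi>t \<eta> :: "'n pt \<Rightarrow> real"
  assumes C\<rho>: "C1 \<rho>" and C\<Psi>s: "C2 \<Psi>s" and C\<Psi>t: "C2 \<Psi>t" and C\<Phi>s: "C2 \<Phi>s" and C\<Phi>t: "C2 \<Phi>t"
    and C\<eta>: "C2 \<eta>" and \<eta>z: "\<And>p. p \<notin> K \<Longrightarrow> \<eta> p = 0"
    and gram_int: "\<And>s t. s \<in> {0<..<1} \<Longrightarrow> t \<in> {0<..<1} \<Longrightarrow>
        integrable lborel (\<lambda>x. (grad \<Psi>s (s, t, x) \<bullet> grad \<Psi>s (s, t, x)) * \<rho> (s, t, x))
      \<and> integrable lborel (\<lambda>x. (grad \<Psi>t (s, t, x) \<bullet> grad \<Psi>t (s, t, x)) * \<rho> (s, t, x))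
      \<and> integrable lborel (\<lambda>x. (grad \<Psi>s (s, t, x) \<bullet> grad \<Psi>t (s, t, x)) * \<rho> (s, t, x))"
    and gc1: "continuous_on ({0<..<1} \<times> {0<..<1}) (\<lambda>z. G \<Psi>s \<Psi>s \<rho> (fst z) (snd z))"
    and gc2: "continuous_on ({0<..<1} \<times> {0<..<1}) (\<lambda>z. G \<Psi>t \<Psi>t \<rho> (fst z) (snd z))"
    and gc3: "continuous_on ({0<..<1} \<times> {0<..<1}) (\<lambda>z. G \<Psi>s \<Psi>t \<rho> (fst z) (snd z))"
    and B_pos: "\<And>s t. s \<in> {0<..<1} \<Longrightarrow> t \<in> {0<..<1} \<Longrightarrow> Bcost \<Psi>s \<Psi>t \<rho> s t > 0"
    and B_int: "set_integrable lborel ({0..1} \<times> {0..1}) (\<lambda>(s, t). Bcost \<Psi>s \<Psi>t \<rho> s t)"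
    and cont_s: "\<And>p. p \<in> Dom \<Longrightarrow> dS \<rho> p + divg (\<lambda>q. \<rho> q *\<^sub>R grad \<Psi>s q) p = 0"
    and cont_t: "\<And>p. p \<in> Dom \<Longrightarrow> dT \<rho> p + divg (\<lambda>q. \<rho> q *\<^sub>R grad \<Psi>t q) p = 0"
  shows "((\<lambda>e. Lag \<rho> \<Psi>s \<Psi>t (\<lambda>p. \<Phi>s p + e * \<eta> p) \<Phi>t) has_real_derivative 0) (at 0)"
proof -
  have "(\<lambda>e. Lag \<rho> \<Psi>s \<Psi>t (\<lambda>p. \<Phi>s p + e * \<eta> p) \<Phi>t)
      = (\<lambda>e. set_lebesgue_integral lborel {0..1} (\<lambda>s. set_lebesgue_integral lborel {0..1} (\<lambda>t.
          Bcost \<Psi>s \<Psi>t \<rho> s t + xint (\<lambda>p. (\<Phi>s p + e * \<eta> p) * (dS \<rho> p + divg (\<lambda>q. \<rho> q *\<^sub>R grad \<Psi>s q) p)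
                 + \<Phi>t p * (dT \<rho> p + divg (\<lambda>q. \<rho> q *\<^sub>R grad \<Psi>t q) p)) s t)))"
    by (simp add: Lag_def)
  moreover have "((\<lambda>e. set_lebesgue_integral lborel {0..1} (\<lambda>s. set_lebesgue_integral lborel {0..1} (\<lambda>t.
          Bcost \<Psi>s \<Psi>t \<rho> s t + xint (\<lambda>p. (\<Phi>s p + e * \<eta> p) * (dS \<rho> p + divg (\<lambda>q. \<rho> q *\<^sub>R grad \<Psi>s q) p)
                 + \<Phi>t p * (dT \<rho> p + divg (\<lambda>q. \<rho> q *\<^sub>R grad \<Psi>t q) p)) s t))) has_real_derivative 0) (at 0)"
  proof (rule var_phi[OF B_pos B_int])
    show "continuous_on ({0<..<1} \<times> {0<..<1}) (\<lambda>z. Bcost \<Psi>s \<Psi>t \<rho> (fst z) (snd z))"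
      unfolding Bcost_def by (intro continuous_intros gc1 gc2 gc3)
    fix e s t assume st: "s \<in> {0<..<1::real}" "t \<in> {0<..<1::real}"
    have z: "(\<Phi>s (s,t,x) + e * \<eta> (s,t,x)) * (dS \<rho> (s,t,x) + divg (\<lambda>q. \<rho> q *\<^sub>R grad \<Psi>s q) (s,t,x))
                 + \<Phi>t (s,t,x) * (dT \<rho> (s,t,x) + divg (\<lambda>q. \<rho> q *\<^sub>R grad \<Psi>t q) (s,t,x)) = 0" for x
      using st cont_s[of "(s,t,x)"] cont_t[of "(s,t,x)"] by (simp add: Dom_iff)
    thus "Bcost \<Psi>s \<Psi>t \<rho> s t + xint (\<lambda>p. (\<Phi>s p + e * \<eta> p) * (dS \<rho> p + divg (\<lambda>q. \<rho> q *\<^sub>R grad \<Psi>s q) p)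
                 + \<Phi>t p * (dT \<rho> p + divg (\<lambda>q. \<rho> q *\<^sub>R grad \<Psi>t q) p)) s t = Bcost \<Psi>s \<Psi>t \<rho> s t"
      by (simp add: xint_def)
  qed
  ultimately show ?thesis by simp
qed

lemma var_phit:
  fixes \<rho> \<Psi>s \<Psi>t \<Phi>s \<Phi>t \<eta> :: "'n pt \<Rightarrow> real"
  assumes C\<rho>: "C1 \<rho>" and C\<Psi>s: "C2 \<Psi>s" and C\<Psi>t: "C2 \<Psi>t" and C\<Phi>s: "C2 \<Phi>s" and C\<Phi>t: "C2 \<Phi>t"
    and C\<eta>: "C2 \<eta>" and \<eta>z: "\<And>p. p \<notin> K \<Longrightarrow> \<eta> p = 0"
    and gram_int: "\<And>s t. s \<in> {0<..<1} \<Longrightarrow> t \<in> {0<..<1} \<Longrightarrow>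
        integrable lborel (\<lambda>x. (grad \<Psi>s (s, t, x) \<bullet> grad \<Psi>s (s, t, x)) * \<rho> (s, t, x))
      \<and> integrable lborel (\<lambda>x. (grad \<Psi>t (s, t, x) \<bullet> grad \<Psi>t (s, t, x)) * \<rho> (s, t, x))
      \<and> integrable lborel (\<lambda>x. (grad \<Psi>s (s, t, x) \<bullet> grad \<Psi>t (s, t, x)) * \<rho> (s, t, x))"
    and gc1: "continuous_on ({0<..<1} \<times> {0<..<1}) (\<lambda>z. G \<Psi>s \<Psi>s \<rho> (fst z) (snd z))"
    and gc2: "continuous_on ({0<..<1} \<times> {0<..<1}) (\<lambda>z. G \<Psi>t \<Psi>t \<rho> (fst z) (snd z))"
    and gc3: "continuous_on ({0<..<1} \<times> {0<..<1}) (\<lambda>z. G \<Psi>s \<Psi>t \<rho> (fst z) (snd z))"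
    and B_pos: "\<And>s t. s \<in> {0<..<1} \<Longrightarrow> t \<in> {0<..<1} \<Longrightarrow> Bcost \<Psi>s \<Psi>t \<rho> s t > 0"
    and B_int: "set_integrable lborel ({0..1} \<times> {0..1}) (\<lambda>(s, t). Bcost \<Psi>s \<Psi>t \<rho> s t)"
    and cont_s: "\<And>p. p \<in> Dom \<Longrightarrow> dS \<rho> p + divg (\<lambda>q. \<rho> q *\<^sub>R grad \<Psi>s q) p = 0"
    and cont_t: "\<And>p. p \<in> Dom \<Longrightarrow> dT \<rho> p + divg (\<lambda>q. \<rho> q *\<^sub>R grad \<Psi>t q) p = 0"
  shows "((\<lambda>e. Lag \<rho> \<Psi>s \<Psi>t \<Phi>s (\<lambda>p. \<Phi>t p + e * \<eta> p)) has_real_derivative 0) (at 0)"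
proof -
  have "(\<lambda>e. Lag \<rho> \<Psi>s \<Psi>t \<Phi>s (\<lambda>p. \<Phi>t p + e * \<eta> p))
      = (\<lambda>e. set_lebesgue_integral lborel {0..1} (\<lambda>s. set_lebesgue_integral lborel {0..1} (\<lambda>t.
          Bcost \<Psi>s \<Psi>t \<rho> s t + xint (\<lambda>p. \<Phi>s p * (dS \<rho> p + divg (\<lambda>q. \<rho> q *\<^sub>R grad \<Psi>s q) p)
                 + (\<Phi>t p + e * \<eta> p) * (dT \<rho> p + divg (\<lambda>q. \<rho> q *\<^sub>R grad \<Psi>t q) p)) s t)))"
    by (simp add: Lag_def)
  moreover have "((\<lambda>e. set_lebesgue_integral lborel {0..1} (\<lambda>s. set_lebesgue_integral lborel {0..1} (\<lambda>t.
          Bcost \<Psi>s \<Psi>t \<rho> s t + xint (\<lambda>p. \<Phi>s p * (dS \<rho> p + divg (\<lambda>q. \<rho> q *\<^sub>R grad \<Psi>s q) p)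
                 + (\<Phi>t p + e * \<eta> p) * (dT \<rho> p + divg (\<lambda>q. \<rho> q *\<^sub>R grad \<Psi>t q) p)) s t))) has_real_derivative 0) (at 0)"
  proof (rule var_phi[OF B_pos B_int])
    show "continuous_on ({0<..<1} \<times> {0<..<1}) (\<lambda>z. Bcost \<Psi>s \<Psi>t \<rho> (fst z) (snd z))"
      unfolding Bcost_def by (intro continuous_intros gc1 gc2 gc3)
    fix e s t assume st: "s \<in> {0<..<1::real}" "t \<in> {0<..<1::real}"
    have z: "\<Phi>s (s,t,x) * (dS \<rho> (s,t,x) + divg (\<lambda>q. \<rho> q *\<^sub>R grad \<Psi>s q) (s,t,x))
                 + (\<Phi>t (s,t,x) + e * \<eta> (s,t,x)) * (dT \<rho> (s,t,x) + divg (\<lambda>q. \<rho> q *\<^sub>R grad \<Psi>t q) (s,t,x)) = 0" for x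
      using st cont_s[of "(s,t,x)"] cont_t[of "(s,t,x)"] by (simp add: Dom_iff)
    thus "Bcost \<Psi>s \<Psi>t \<rho> s t + xint (\<lambda>p. \<Phi>s p * (dS \<rho> p + divg (\<lambda>q. \<rho> q *\<^sub>R grad \<Psi>s q) p)
                 + (\<Phi>t p + e * \<eta> p) * (dT \<rho> p + divg (\<lambda>q. \<rho> q *\<^sub>R grad \<Psi>t q) p)) s t = Bcost \<Psi>s \<Psi>t \<rho> s t"
      by (simp add: xint_def)
  qed
  ultimately show ?thesis by simp
qed

end


theorem mainTheorem2:
  fixes \<rho> \<Psi>s \<Psi>t \<Phi>s \<Phi>t :: "('n::finite) pt \<Rightarrow> real"
  assumes smooth: "smooth_on Dom \<rho>" "smooth_on Dom \<Psi>s" "smooth_on Dom \<Psi>t"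
      "smooth_on Dom \<Phi>s" "smooth_on Dom \<Phi>t"
    and density: "\<And>s t. s \<in> {0..1} \<Longrightarrow> t \<in> {0..1} \<Longrightarrow>
        (\<forall>x. \<rho> (s, t, x) \<ge> 0) \<and> integrable lborel (\<lambda>x. \<rho> (s, t, x))
        \<and> (\<integral>x. \<rho> (s, t, x) \<partial>lborel) = 1
        \<and> integrable lborel (\<lambda>x. (norm x)\<^sup>2 * \<rho> (s, t, x))"
    and gram_int: "\<And>s t. s \<in> {0<..<1} \<Longrightarrow> t \<in> {0<..<1} \<Longrightarrow>
        integrable lborel (\<lambda>x. (grad \<Psi>s (s, t, x) \<bullet> grad \<Psi>s (s, t, x)) * \<rho> (s, t, x))
      \<and> integrable lborel (\<lambda>x. (grad \<Psi>t (s, t, x) \<bullet> grad \<Psi>t (s, t, x)) * \<rho> (s, t, x))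
      \<and> integrable lborel (\<lambda>x. (grad \<Psi>s (s, t, x) \<bullet> grad \<Psi>t (s, t, x)) * \<rho> (s, t, x))"
    and gram_cont: "continuous_on ({0<..<1} \<times> {0<..<1}) (\<lambda>(s, t). G \<Psi>s \<Psi>s \<rho> s t)"
      "continuous_on ({0<..<1} \<times> {0<..<1}) (\<lambda>(s, t). G \<Psi>t \<Psi>t \<rho> s t)"
      "continuous_on ({0<..<1} \<times> {0<..<1}) (\<lambda>(s, t). G \<Psi>s \<Psi>t \<rho> s t)"
    and B_pos: "\<And>s t. s \<in> {0<..<1} \<Longrightarrow> t \<in> {0<..<1} \<Longrightarrow> Bcost \<Psi>s \<Psi>t \<rho> s t > 0"
    and B_int: "set_integrable lborel ({0..1} \<times> {0..1}) (\<lambda>(s, t). Bcost \<Psi>s \<Psi>t \<rho> s t)"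
    and eq_s: "\<And>p. p \<in> Dom \<Longrightarrow>
        (let s = fst p; t = fst (snd p) in
          (1 / Bcost \<Psi>s \<Psi>t \<rho> s t) *
            divg (\<lambda>q. \<rho> q *\<^sub>R (G \<Psi>t \<Psi>t \<rho> s t *\<^sub>R grad \<Psi>s q - G \<Psi>s \<Psi>t \<rho> s t *\<^sub>R grad \<Psi>t q)) p
          = divg (\<lambda>q. \<rho> q *\<^sub>R grad \<Phi>s q) p)"
    and eq_t: "\<And>p. p \<in> Dom \<Longrightarrow>
        (let s = fst p; t = fst (snd p) in
          (1 / Bcost \<Psi>s \<Psi>t \<rho> s t) *
            divg (\<lambda>q. \<rho> q *\<^sub>R (G \<Psi>s \<Psi>s \<rho> s t *\<^sub>R grad \<Psi>t q - G \<Psi>s \<Psi>t \<rho> s t *\<^sub>R grad \<Psi>s q)) p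
          = divg (\<lambda>q. \<rho> q *\<^sub>R grad \<Phi>t q) p)"
    and eq_rho: "\<And>p. p \<in> Dom \<Longrightarrow>
        (let s = fst p; t = fst (snd p) in
          dS \<Phi>s p + dT \<Phi>t p + grad \<Phi>s p \<bullet> grad \<Psi>s p + grad \<Phi>t p \<bullet> grad \<Psi>t p
          - (1 / Bcost \<Psi>s \<Psi>t \<rho> s t) *
              ((1/2) * (grad \<Psi>s p \<bullet> grad \<Psi>s p) * G \<Psi>t \<Psi>t \<rho> s t
             + (1/2) * (grad \<Psi>t p \<bullet> grad \<Psi>t p) * G \<Psi>s \<Psi>s \<rho> s t
             - (grad \<Psi>t p \<bullet> grad \<Psi>s p) * G \<Psi>t \<Psi>s \<rho> s t) = 0)"
    and cont_s: "\<And>p. p \<in> Dom \<Longrightarrow> dS \<rho> p + divg (\<lambda>q. \<rho> q *\<^sub>R grad \<Psi>s q) p = 0"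
    and cont_t: "\<And>p. p \<in> Dom \<Longrightarrow> dT \<rho> p + divg (\<lambda>q. \<rho> q *\<^sub>R grad \<Psi>t q) p = 0"
  shows "critical_point \<rho> \<Psi>s \<Psi>t \<Phi>s \<Phi>t"
proof -
  have C\<rho>: "C1 \<rho>" by (rule C2_C1[OF C2_smooth[OF smooth(1)]])
  have C\<Psi>s: "C2 \<Psi>s" by (rule C2_smooth[OF smooth(2)])
  have C\<Psi>t: "C2 \<Psi>t" by (rule C2_smooth[OF smooth(3)])
  have C\<Phi>s: "C2 \<Phi>s" by (rule C2_smooth[OF smooth(4)])
  have C\<Phi>t: "C2 \<Phi>t" by (rule C2_smooth[OF smooth(5)])
  have gc1: "continuous_on ({0<..<1} \<times> {0<..<1}) (\<lambda>z. G \<Psi>s \<Psi>s \<rho> (fst z) (snd z))"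
    using gram_cont(1) by (simp add: case_prod_unfold)
  have gc2: "continuous_on ({0<..<1} \<times> {0<..<1}) (\<lambda>z. G \<Psi>t \<Psi>t \<rho> (fst z) (snd z))"
    using gram_cont(2) by (simp add: case_prod_unfold)
  have gc3: "continuous_on ({0<..<1} \<times> {0<..<1}) (\<lambda>z. G \<Psi>s \<Psi>t \<rho> (fst z) (snd z))"
    using gram_cont(3) by (simp add: case_prod_unfold)
  show ?thesis unfolding critical_point_def
  proof (intro allI impI)
    fix \<eta> :: "'n pt \<Rightarrow> real"
    assume "test_fun \<eta>"
    then obtain K where sm: "smooth_on UNIV \<eta>" and K: "compact K" "K \<subseteq> Dom"
      and \<eta>z0: "\<forall>p. p \<notin> K \<longrightarrow> \<eta> p = 0"
      unfolding test_fun_def by blast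
    have \<eta>z: "\<And>p. p \<notin> K \<Longrightarrow> \<eta> p = 0" using \<eta>z0 by blast
    have "bounded ((\<lambda>p. snd (snd p)) ` K)"
      by (rule compact_imp_bounded, rule compact_continuous_image[OF _ K(1)]) (auto intro!: continuous_intros)
    then obtain a :: "real^'n" where box: "(\<lambda>p. snd (snd p)) ` K \<subseteq> cbox (-a) a"
      using bounded_subset_cbox_symmetric by blast
    interpret kb: kbox K "-a" a
      by unfold_locales (use K box in auto)
    have C\<eta>: "C2 \<eta>" by (rule C2_smooth_UNIV[OF sm])
    show "((\<lambda>\<epsilon>. Lag (\<lambda>p. \<rho> p + \<epsilon> * \<eta> p) \<Psi>s \<Psi>t \<Phi>s \<Phi>t) has_real_derivative 0) (at 0) \<and>
          ((\<lambda>\<epsilon>. Lag \<rho> (\<lambda>p. \<Psi>s p + \<epsilon> * \<eta> p) \<Psi>t \<Phi>s \<Phi>t) has_real_derivative 0) (at 0) \<and>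
          ((\<lambda>\<epsilon>. Lag \<rho> \<Psi>s (\<lambda>p. \<Psi>t p + \<epsilon> * \<eta> p) \<Phi>s \<Phi>t) has_real_derivative 0) (at 0) \<and>
          ((\<lambda>\<epsilon>. Lag \<rho> \<Psi>s \<Psi>t (\<lambda>p. \<Phi>s p + \<epsilon> * \<eta> p) \<Phi>t) has_real_derivative 0) (at 0) \<and>
          ((\<lambda>\<epsilon>. Lag \<rho> \<Psi>s \<Psi>t \<Phi>s (\<lambda>p. \<Phi>t p + \<epsilon> * \<eta> p)) has_real_derivative 0) (at 0)"
    proof (intro conjI)
      show "((\<lambda>\<epsilon>. Lag (\<lambda>p. \<rho> p + \<epsilon> * \<eta> p) \<Psi>s \<Psi>t \<Phi>s \<Phi>t) has_real_derivative 0) (at 0)"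
        by (rule kb.var_rho[OF C\<rho> C\<Psi>s C\<Psi>t C\<Phi>s C\<Phi>t C\<eta> \<eta>z gram_int gc1 gc2 gc3 B_pos B_int eq_rho cont_s cont_t])
      show "((\<lambda>\<epsilon>. Lag \<rho> (\<lambda>p. \<Psi>s p + \<epsilon> * \<eta> p) \<Psi>t \<Phi>s \<Phi>t) has_real_derivative 0) (at 0)"
        by (rule kb.var_psis[OF C\<rho> C\<Psi>s C\<Psi>t C\<Phi>s C\<Phi>t C\<eta> \<eta>z gram_int gc1 gc2 gc3 B_pos B_int cont_s cont_t eq_s])
      show "((\<lambda>\<epsilon>. Lag \<rho> \<Psi>s (\<lambda>p. \<Psi>t p + \<epsilon> * \<eta> p) \<Phi>s \<Phi>t) has_real_derivative 0) (at 0)"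
        by (rule kb.var_psit[OF C\<rho> C\<Psi>s C\<Psi>t C\<Phi>s C\<Phi>t C\<eta> \<eta>z gram_int gc1 gc2 gc3 B_pos B_int cont_s cont_t eq_t])
      show "((\<lambda>\<epsilon>. Lag \<rho> \<Psi>s \<Psi>t (\<lambda>p. \<Phi>s p + \<epsilon> * \<eta> p) \<Phi>t) has_real_derivative 0) (at 0)"
        by (rule kb.var_phis[OF C\<rho> C\<Psi>s C\<Psi>t C\<Phi>s C\<Phi>t C\<eta> \<eta>z gram_int gc1 gc2 gc3 B_pos B_int cont_s cont_t])
      show "((\<lambda>\<epsilon>. Lag \<rho> \<Psi>s \<Psi>t \<Phi>s (\<lambda>p. \<Phi>t p + \<epsilon> * \<eta> p)) has_real_derivative 0) (at 0)"
        by (rule kb.var_phit[OF C\<rho> C\<Psi>s C\<Psi>t C\<Phi>s C\<Phi>t C\<eta> \<eta>z gram_int gc1 gc2 gc3 B_pos B_int cont_s cont_t])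
    qed
  qed
qed

end
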